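(* Let $u:\mathbb R\times(0,\infty)\to\mathbb R$ be twice continuously differentiable in $x$ and continuously differentiable in $t$, with $\partial_tu-\partial_x^2u=0$ on $\mathbb R\times(0,\infty)$. Suppose $u(\cdot,t)\in\mathcal A_c$ for each $t>0$, $\|u(\cdot,t)\|$ is bounded for $t\in(0,\infty)$, and $\lim_{t\to0^+}\|u(\cdot,t)-f\|=0$ for some $f\in\mathcal A_c$. Then $u(x,t)=f\ast\Theta_t(x)$ for all $(x,t)\in\mathbb R\times(0,\infty)$; i.e., $f\ast\Theta_t$ is the unique solution with these properties.
   Context: Let $\mathcal B_c$ be the set of continuous $F:\mathbb R\to\mathbb R$ such that $\lim_{x\to\pm\infty}F(x)$ exist as real numbers and $\lim_{x\to-\infty}F(x)=0$. $\mathcal A_c$ is the set of distributions $f=F'$ (distributional derivative) with $F\in\mathcal B_c$ (unique primitive); integral $\int_a^bf=F(b)-F(a)$; Alexiewicz norm $\|f\|=\sup_{x<y}|F(y)-F(x)|$. For $h$ of bounded variation, $\int_{-\infty}^\infty fh:=F(\infty)h(\infty)-\int F\,dh$ (Henstock–Stieltjes), and $f\ast h(x)=\int_{-\infty}^\infty f(\xi)h(x-\xi)\,d\xi$ in this sense. $\Theta_t(x)=(4\pi t)^{-1/2}e^{-x^2/(4t)}$, $t>0$. *)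

theory Defs
  imports "HOL-Analysis.Analysis"
begin

definition Bc :: "(real \<Rightarrow> real) set" where
  "Bc = {F. continuous_on UNIV F \<and> (\<exists>L. (F \<longlongrightarrow> L) at_top) \<and> (F \<longlongrightarrow> 0) at_bot}"

text \<open>For a continuous function g, F in B_c is the (unique) primitive of g, i.e. g = F'
  (for continuous g the distributional derivative is the pointwise one).\<close>
definition Ac_primitive :: "(real \<Rightarrow> real) \<Rightarrow> (real \<Rightarrow> real) \<Rightarrow> bool" where
  "Ac_primitive F g \<longleftrightarrow> F \<in> Bc \<and> (\<forall>x. (F has_real_derivative g x) (at x))"

definition in_Ac :: "(real \<Rightarrow> real) \<Rightarrow> bool" where
  "in_Ac g \<longleftrightarrow> (\<exists>F. Ac_primitive F g)"

definition primitive :: "(real \<Rightarrow> real) \<Rightarrow> (real \<Rightarrow> real)" where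
  "primitive g = (THE F. Ac_primitive F g)"

text \<open>Alexiewicz norm of the distribution whose primitive is F.\<close>
definition alex_norm :: "(real \<Rightarrow> real) \<Rightarrow> real" where
  "alex_norm F = (SUP p \<in> {(x, y). x < y}. \<bar>F (snd p) - F (fst p)\<bar>)"

definition heat_kernel :: "real \<Rightarrow> real \<Rightarrow> real" where
  "heat_kernel t x = (4 * pi * t) powr (-1/2) * exp (- (x^2) / (4 * t))"

text \<open>Convolution f * h (x) = F(inf) h(x - inf) - int F(xi) d[h(x - xi)], for f with primitive F,
  specialised to differentiable kernels h, where the Stieltjes integral against
  xi -> h(x - xi) is the integral of F times the derivative of xi -> h(x - xi).\<close>
definition Ac_conv :: "(real \<Rightarrow> real) \<Rightarrow> (real \<Rightarrow> real) \<Rightarrow> real \<Rightarrow> real" where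
  "Ac_conv F h x = Lim at_top F * Lim at_top (\<lambda>\<xi>. h (x - \<xi>))
     - integral UNIV (\<lambda>\<xi>. F \<xi> * deriv (\<lambda>\<eta>. h (x - \<eta>)) \<xi>)"

end

theory Submission
  imports Defs "HOL-Probability.Distributions" "HOL-Real_Asymp.Real_Asymp"
begin


definition hk1 :: "real \<Rightarrow> real \<Rightarrow> real" where
  "hk1 \<tau> \<eta> = -(\<eta> / (2*\<tau>)) * heat_kernel \<tau> \<eta>"
definition hk2 :: "real \<Rightarrow> real \<Rightarrow> real" where
  "hk2 \<tau> \<eta> = (\<eta>^2 / (4*\<tau>^2) - 1 / (2*\<tau>)) * heat_kernel \<tau> \<eta>"
definition hk3 :: "real \<Rightarrow> real \<Rightarrow> real" where
  "hk3 \<tau> \<eta> = (3*\<eta> / (4*\<tau>^2) - \<eta>^3 / (8*\<tau>^3)) * heat_kernel \<tau> \<eta>"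

lemma hk_eq: "\<tau> > 0 \<Longrightarrow> heat_kernel \<tau> \<eta> = exp (-(\<eta>^2) / (4*\<tau>)) / sqrt (4*pi*\<tau>)"
  unfolding heat_kernel_def
  by (simp add: powr_minus powr_half_sqrt[symmetric] divide_simps)

lemma hk_normal: "\<tau> > 0 \<Longrightarrow> heat_kernel \<tau> (x0 - \<xi>) = normal_density x0 (sqrt (2*\<tau>)) \<xi>"
  unfolding hk_eq normal_density_def
  by (simp add: power2_commute real_sqrt_mult power_mult_distrib)

lemma hk_pos: "\<tau> > 0 \<Longrightarrow> heat_kernel \<tau> \<eta> > 0"
  by (simp add: hk_eq)

lemma d_gauss: "\<tau> \<noteq> 0 \<Longrightarrow> ((\<lambda>\<eta>. c * exp (-(\<eta>^2) / (4*\<tau>))) has_real_derivative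
      c * exp (-(\<eta>^2) / (4*\<tau>)) * (-(2*\<eta>) / (4*\<tau>))) (at \<eta>)"
  by (auto intro!: derivative_eq_intros simp: field_simps)

lemma d_eta0: "\<tau> > 0 \<Longrightarrow> (heat_kernel \<tau> has_real_derivative hk1 \<tau> \<eta>) (at \<eta>)"
proof -
  assume t: "\<tau> > 0"
  have e: "heat_kernel \<tau> = (\<lambda>\<eta>. (1/sqrt (4*pi*\<tau>)) * exp (-(\<eta>^2) / (4*\<tau>)))"
    using hk_eq[OF t] by (simp add: fun_eq_iff)
  show ?thesis unfolding e hk1_def
    using d_gauss[where c="1/sqrt (4*pi*\<tau>)" and \<tau>=\<tau> and \<eta>=\<eta>] t by (simp add: field_simps)
qed

lemma d_eta1: "\<tau> > 0 \<Longrightarrow> (hk1 \<tau> has_real_derivative hk2 \<tau> \<eta>) (at \<eta>)"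
proof -
  assume t: "\<tau> > 0"
  have "((\<lambda>\<eta>. -(\<eta> / (2*\<tau>)) * heat_kernel \<tau> \<eta>) has_real_derivative
     (-(1/(2*\<tau>))) * heat_kernel \<tau> \<eta> + (-(\<eta> / (2*\<tau>))) * hk1 \<tau> \<eta>) (at \<eta>)"
    using t by (auto intro!: derivative_eq_intros d_eta0 simp: field_simps)
  moreover have "(-(1/(2*\<tau>))) * heat_kernel \<tau> \<eta> + (-(\<eta> / (2*\<tau>))) * hk1 \<tau> \<eta> = hk2 \<tau> \<eta>"
    unfolding hk1_def hk2_def using t by (simp add: field_simps power2_eq_square)
  ultimately show ?thesis by (simp add: hk1_def[abs_def])
qed

lemma d_eta2: "\<tau> > 0 \<Longrightarrow> (hk2 \<tau> has_real_derivative hk3 \<tau> \<eta>) (at \<eta>)"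
proof -
  assume t: "\<tau> > 0"
  have "((\<lambda>\<eta>. (\<eta>^2 / (4*\<tau>^2) - 1 / (2*\<tau>)) * heat_kernel \<tau> \<eta>) has_real_derivative
     (2*\<eta>/(4*\<tau>^2)) * heat_kernel \<tau> \<eta> + (\<eta>^2 / (4*\<tau>^2) - 1 / (2*\<tau>)) * hk1 \<tau> \<eta>) (at \<eta>)"
    using t by (auto intro!: derivative_eq_intros d_eta0 simp: field_simps)
  moreover have "(2*\<eta>/(4*\<tau>^2)) * heat_kernel \<tau> \<eta> + (\<eta>^2 / (4*\<tau>^2) - 1 / (2*\<tau>)) * hk1 \<tau> \<eta> = hk3 \<tau> \<eta>"
    unfolding hk1_def hk3_def using t by (simp add: field_simps power2_eq_square power3_eq_cube)
  ultimately show ?thesis by (simp add: hk2_def[abs_def])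
qed

lemma d_tau0: "\<tau> > 0 \<Longrightarrow> ((\<lambda>\<tau>. heat_kernel \<tau> \<eta>) has_real_derivative hk2 \<tau> \<eta>) (at \<tau>)"
proof -
  assume t: "\<tau> > 0"
  have ev: "eventually (\<lambda>r. heat_kernel r \<eta> = exp (-(\<eta>^2) / (4*r)) / sqrt (4*pi*r)) (nhds \<tau>)"
    using eventually_nhds_in_open[of "{0<..}" \<tau>] t hk_eq
    by (auto elim!: eventually_mono)
  have "((\<lambda>r. exp (-(\<eta>^2) / (4*r)) / sqrt (4*pi*r)) has_real_derivative hk2 \<tau> \<eta>) (at \<tau>)"
    unfolding hk2_def hk_eq[OF t] using t
    by (auto intro!: derivative_eq_intros simp: field_simps power2_eq_square real_sqrt_mult)
  then show ?thesis
    by (rule has_field_derivative_transform_within_open[where S="{0<..}"]) (use t hk_eq in auto)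
qed




lemma cont_hk[continuous_intros]:
  assumes "continuous_on S f" "continuous_on S g" "\<And>x. x \<in> S \<Longrightarrow> f x > 0"
  shows "continuous_on S (\<lambda>x. heat_kernel (f x) (g x))"
  unfolding heat_kernel_def using assms
  by (intro continuous_intros) (auto dest: assms(3))

lemma cont_hk1[continuous_intros]:
  assumes "continuous_on S f" "continuous_on S g" "\<And>x. x \<in> S \<Longrightarrow> f x > 0"
  shows "continuous_on S (\<lambda>x. hk1 (f x) (g x))"
  unfolding hk1_def using assms
  by (intro continuous_intros) (auto dest: assms(3))

lemma cont_hk2[continuous_intros]:
  assumes "continuous_on S f" "continuous_on S g" "\<And>x. x \<in> S \<Longrightarrow> f x > 0"
  shows "continuous_on S (\<lambda>x. hk2 (f x) (g x))"
  unfolding hk2_def using assms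
  by (intro continuous_intros) (auto dest: assms(3))

lemma exp_quartic: assumes "y \<ge> (0::real)" shows "y^2 \<le> 4 * exp y"
proof -
  have "1 + y/2 \<le> exp (y/2)" by (rule exp_ge_add_one_self)
  hence "(1 + y/2)^2 \<le> (exp (y/2))^2" using assms by (intro power_mono) auto
  also have "(exp (y/2))^2 = exp y" by (simp add: exp_double[symmetric])
  finally have "(1 + y/2)^2 \<le> exp y" .
  moreover have "(1 + y/2)^2 = 1 + y + y^2/4" by (simp add: power2_eq_square field_simps)
  ultimately show ?thesis using assms by simp
qed

lemma poly_gauss: fixes \<tau> \<eta> :: real assumes "\<tau> > 0"
  shows "(1 + \<eta>^4) * exp (-(\<eta>^2) / (4*\<tau>)) \<le> 1 + 64 * \<tau>^2"
proof -
  define y where "y = \<eta>^2 / (4*\<tau>)"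
  have y0: "y \<ge> 0" using assms by (simp add: y_def)
  have e4: "\<eta>^4 = 16 * \<tau>^2 * y^2" using assms by (simp add: y_def power2_eq_square field_simps)
       (simp add: power4_eq_xxxx)
  have A: "(1 + \<eta>^4) * exp (-y) = exp (-y) + 16 * \<tau>^2 * (y^2 * exp (-y))"
    by (simp add: e4 algebra_simps)
  have B: "y^2 * exp (-y) \<le> 4" using exp_quartic[OF y0] by (simp add: exp_minus field_simps)
  have C: "16 * \<tau>^2 * (y^2 * exp (-y)) \<le> 16 * \<tau>^2 * 4" by (rule mult_left_mono[OF B]) auto
  have D: "exp (-y) \<le> 1" using y0 by simp
  have "(1 + \<eta>^4) * exp (-y) \<le> 1 + 64 * \<tau>^2" using A C D by linarith
  then show ?thesis by (simp add: y_def)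
qed

lemma abs_le_quartic: "\<bar>x::real\<bar> \<le> 1 + x^4"
proof (cases "\<bar>x\<bar> \<le> 1")
  case True then show ?thesis by (simp add: add_increasing2)
next
  case False
  hence "\<bar>x\<bar> \<le> \<bar>x\<bar>^4" by (intro self_le_power) auto
  moreover have "\<bar>x\<bar>^4 = x^4" by (simp add: power_even_abs)
  ultimately show ?thesis by simp
qed

lemma cubic_le_quartic_aux: "(a::real) \<ge> 0 \<Longrightarrow> (1 + a) * (1 + a^2) \<le> 4 * (1 + a^4)"
proof -
  assume a0: "a \<ge> 0"
  have e1: "a^2 - 2*a + 1 = (a-1)^2" "a^4 - 2*a^2 + 1 = (a^2-1)^2" "a^4 - 2*a^3 + a^2 = a^2*(a-1)^2"
    "(1 + a) * (1 + a^2) = 1 + a + a^2 + a^3"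
    by (simp_all add: power2_eq_square power3_eq_cube power4_eq_xxxx algebra_simps)
  have h1: "0 \<le> a^2 - 2*a + 1" "0 \<le> a^4 - 2*a^2 + 1" "0 \<le> a^4 - 2*a^3 + a^2"
    unfolding e1 using a0 by auto
  have "0 \<le> a^4" by simp
  then show ?thesis using h1 unfolding e1(4) by (smt (verit))
qed

lemma cubic_le_quartic: "(1 + \<bar>x::real\<bar>) * (1 + x^2) \<le> 4 * (1 + x^4)"
  using cubic_le_quartic_aux[of "\<bar>x\<bar>"] by (simp add: power_even_abs)




lemma hk_bounds:
  fixes \<tau>1 \<tau>2 :: real
  assumes t1: "0 < \<tau>1"
  shows "\<exists>B>0. \<forall>\<tau> \<eta>. \<tau>1 \<le> \<tau> \<and> \<tau> \<le> \<tau>2 \<longrightarrow>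
     heat_kernel \<tau> \<eta> \<le> B \<and> \<bar>hk1 \<tau> \<eta>\<bar> \<le> B \<and> (1 + \<bar>\<eta>\<bar>) * \<bar>hk2 \<tau> \<eta>\<bar> \<le> B"
proof -
  define c1 where "c1 = 1 / sqrt (4*pi*\<tau>1)"
  define P where "P = 1 + 64 * \<tau>2^2"
  define q where "q = 1/(4*\<tau>1^2) + 1/(2*\<tau>1)"
  have c1p: "c1 > 0" using t1 by (simp add: c1_def)
  have Pp: "P \<ge> 1" by (simp add: P_def)
  have qp: "q > 0" using t1 unfolding q_def by (intro add_pos_pos) auto
  define B where "B = c1 * P * (1 + 1/(2*\<tau>1) + 4*q)"
  have Bp: "B > 0" using c1p Pp qp t1 by (simp add: B_def add_pos_pos)
  have main: "heat_kernel \<tau> \<eta> \<le> B \<and> \<bar>hk1 \<tau> \<eta>\<bar> \<le> B \<and> (1 + \<bar>\<eta>\<bar>) * \<bar>hk2 \<tau> \<eta>\<bar> \<le> B"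
    if tt: "\<tau>1 \<le> \<tau>" "\<tau> \<le> \<tau>2" for \<tau> \<eta>
  proof -
    have tp: "\<tau> > 0" using tt t1 by simp
    define e where "e = exp (-(\<eta>^2) / (4*\<tau>))"
    have e0: "0 < e" "e \<le> 1" using tp by (auto simp: e_def)
    have hke: "heat_kernel \<tau> \<eta> = (1 / sqrt (4*pi*\<tau>)) * e" using hk_eq[OF tp] by (simp add: e_def)
    have s1: "1 / sqrt (4*pi*\<tau>) \<le> c1" unfolding c1_def using tt t1
      by (intro divide_left_mono) auto
    have eP: "(1 + \<eta>^4) * e \<le> P"
    proof -
      have "(1 + \<eta>^4) * e \<le> 1 + 64 * \<tau>^2" unfolding e_def by (rule poly_gauss[OF tp])
      also have "\<dots> \<le> P" unfolding P_def using tt tp by (simp add: power_mono)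
      finally show ?thesis .
    qed
    have hkpos: "heat_kernel \<tau> \<eta> \<ge> 0" using less_imp_le[OF hk_pos[OF tp]] by simp
    have k: "(1 + \<eta>^4) * heat_kernel \<tau> \<eta> \<le> c1 * P"
    proof -
      have "(1 + \<eta>^4) * heat_kernel \<tau> \<eta> = (1 / sqrt (4*pi*\<tau>)) * ((1 + \<eta>^4) * e)"
        by (simp add: hke)
      also have "\<dots> \<le> c1 * P" by (rule mult_mono[OF s1 eP]) (use c1p tp e0 in \<open>auto intro!: mult_nonneg_nonneg add_nonneg_nonneg\<close>)
      finally show ?thesis .
    qed
    have q4: "0 \<le> \<eta>^4" by simp
    have q5: "0 \<le> \<eta>^4 * heat_kernel \<tau> \<eta>" using hkpos by simp
    have k0: "heat_kernel \<tau> \<eta> \<le> c1 * P"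
      using k q5 by (simp add: distrib_right)
    have "\<bar>hk1 \<tau> \<eta>\<bar> = (\<bar>\<eta>\<bar> / (2*\<tau>)) * heat_kernel \<tau> \<eta>"
      unfolding hk1_def using tp hkpos by (simp add: abs_mult)
    also have "\<dots> \<le> ((1 + \<eta>^4) / (2*\<tau>1)) * heat_kernel \<tau> \<eta>"
      using tt tp t1 abs_le_quartic[of \<eta>] hkpos
      by (intro mult_right_mono frac_le) auto
    also have "\<dots> = (1/(2*\<tau>1)) * ((1 + \<eta>^4) * heat_kernel \<tau> \<eta>)" by simp
    also have "\<dots> \<le> (1/(2*\<tau>1)) * (c1 * P)" using k t1 by (intro mult_left_mono) auto
    finally have k1: "\<bar>hk1 \<tau> \<eta>\<bar> \<le> (1/(2*\<tau>1)) * (c1 * P)" .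
    have qq: "\<bar>\<eta>^2 / (4*\<tau>^2) - 1 / (2*\<tau>)\<bar> \<le> q * (1 + \<eta>^2)"
    proof -
      have a0: "0 \<le> \<eta>^2 / (4*\<tau>^2)" by simp
      have b0: "0 \<le> 1 / (2*\<tau>)" using tp by simp
      have "\<bar>\<eta>^2 / (4*\<tau>^2) - 1 / (2*\<tau>)\<bar> \<le> \<eta>^2 / (4*\<tau>^2) + 1 / (2*\<tau>)"
        using a0 b0 by (simp only: abs_le_iff) linarith
      also have "\<eta>^2 / (4*\<tau>^2) \<le> \<eta>^2 / (4*\<tau>1^2)"
        using tt t1 by (intro divide_left_mono mult_left_mono power_mono) auto
      also have "1 / (2*\<tau>) \<le> 1/(2*\<tau>1)" using tt t1 by (intro divide_left_mono) auto
      also have "\<eta>^2 / (4*\<tau>1^2) + 1/(2*\<tau>1) \<le> q * (1 + \<eta>^2)"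
      proof -
        have "1/(2*\<tau>1) \<le> (1+\<eta>^2)/(2*\<tau>1)" using t1 by (intro divide_right_mono) auto
        moreover have "\<eta>^2/(4*\<tau>1^2) \<le> (1+\<eta>^2)/(4*\<tau>1^2)" by (intro divide_right_mono) auto
        moreover have "q * (1+\<eta>^2) = (1+\<eta>^2)/(4*\<tau>1^2) + (1+\<eta>^2)/(2*\<tau>1)"
          unfolding q_def using t1 by (simp add: field_simps)
        ultimately show ?thesis by linarith
      qed
      finally show ?thesis by simp
    qed
    have "(1 + \<bar>\<eta>\<bar>) * \<bar>hk2 \<tau> \<eta>\<bar> = (1 + \<bar>\<eta>\<bar>) * \<bar>\<eta>^2 / (4*\<tau>^2) - 1 / (2*\<tau>)\<bar> * heat_kernel \<tau> \<eta>"
      unfolding hk2_def using hkpos by (simp add: abs_mult)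
    also have "\<dots> \<le> (1 + \<bar>\<eta>\<bar>) * (q * (1 + \<eta>^2)) * heat_kernel \<tau> \<eta>"
      using qq hkpos by (intro mult_right_mono mult_left_mono) auto
    also have "\<dots> = q * ((1 + \<bar>\<eta>\<bar>) * (1 + \<eta>^2)) * heat_kernel \<tau> \<eta>" by simp
    also have "\<dots> \<le> q * (4 * (1 + \<eta>^4)) * heat_kernel \<tau> \<eta>"
      using cubic_le_quartic[of \<eta>] qp hkpos by (intro mult_right_mono mult_left_mono) auto
    also have "\<dots> = 4 * q * ((1 + \<eta>^4) * heat_kernel \<tau> \<eta>)" by simp
    also have "\<dots> \<le> 4 * q * (c1 * P)" using k qp by (intro mult_left_mono) auto
    finally have k2: "(1 + \<bar>\<eta>\<bar>) * \<bar>hk2 \<tau> \<eta>\<bar> \<le> 4 * q * (c1 * P)" .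
    have cP: "c1 * P > 0" using c1p Pp by simp
    have B': "B = c1 * P + (1/(2*\<tau>1)) * (c1 * P) + 4 * q * (c1 * P)"
      unfolding B_def by (simp add: algebra_simps)
    have "0 \<le> (1/(2*\<tau>1)) * (c1 * P)" "0 \<le> 4 * q * (c1 * P)" using t1 cP qp by auto
    then show ?thesis using k0 k1 k2 cP unfolding B' by linarith
  qed
  show ?thesis using Bp main by blast
qed



definition cw :: "real \<Rightarrow> real \<Rightarrow> real" where "cw L \<xi> = 1 - (\<xi>/L)^2"
definition cutf :: "real \<Rightarrow> real \<Rightarrow> real" where "cutf L \<xi> = (cw L \<xi>)^4"
definition cutf1 :: "real \<Rightarrow> real \<Rightarrow> real" where "cutf1 L \<xi> = -(8/L) * (\<xi>/L) * (cw L \<xi>)^3"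
definition cutf2 :: "real \<Rightarrow> real \<Rightarrow> real" where
  "cutf2 L \<xi> = (1/L^2) * (48 * (\<xi>/L)^2 * (cw L \<xi>)^2 - 8 * (cw L \<xi>)^3)"
definition cutf3 :: "real \<Rightarrow> real \<Rightarrow> real" where
  "cutf3 L \<xi> = (1/L^3) * (144 * (\<xi>/L) * (cw L \<xi>)^2 - 192 * (\<xi>/L)^3 * cw L \<xi>)"
lemma d_cut0: "L \<noteq> 0 \<Longrightarrow> (cutf L has_real_derivative cutf1 L \<xi>) (at \<xi>)"
  unfolding cutf_def[abs_def] cutf1_def cw_def
  apply (rule derivative_eq_intros refl | assumption)+
  apply (simp add: field_simps)
  done
lemma d_cut1: "L \<noteq> 0 \<Longrightarrow> (cutf1 L has_real_derivative cutf2 L \<xi>) (at \<xi>)"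
  unfolding cutf1_def[abs_def] cutf2_def cw_def
  apply (rule derivative_eq_intros refl | assumption)+
  apply (simp add: field_simps)
  apply algebra
  done
lemma d_cut2: "L \<noteq> 0 \<Longrightarrow> (cutf2 L has_real_derivative cutf3 L \<xi>) (at \<xi>)"
  unfolding cutf2_def[abs_def] cutf3_def cw_def
  apply (rule derivative_eq_intros refl | assumption)+
  apply (simp add: field_simps)
  apply algebra
  done
lemma cut_zero: "L \<noteq> 0 \<Longrightarrow> \<bar>\<xi>\<bar> = L \<Longrightarrow> cutf L \<xi> = 0 \<and> cutf1 L \<xi> = 0 \<and> cutf2 L \<xi> = 0"
proof -
  assume L: "L \<noteq> 0" "\<bar>\<xi>\<bar> = L"
  have "\<xi>^2 = L^2" using L(2) by (metis power2_abs)
  hence "(\<xi>/L)^2 = 1" using L(1) by (simp add: power_divide)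
  hence "cw L \<xi> = 0" by (simp add: cw_def)
  thus ?thesis by (simp add: cutf_def cutf1_def cutf2_def)
qed

lemma aw_le1: "\<bar>a::real\<bar> \<le> 1 \<Longrightarrow> 0 \<le> w \<Longrightarrow> w \<le> 1 \<Longrightarrow> \<bar>a^k * w^m\<bar> \<le> 1"
  by (simp add: abs_mult power_abs mult_le_one power_le_one)

lemma cw_bounds: "L > 0 \<Longrightarrow> \<bar>\<xi>\<bar> \<le> L \<Longrightarrow> 0 \<le> cw L \<xi> \<and> cw L \<xi> \<le> 1 \<and> \<bar>\<xi>/L\<bar> \<le> 1"
proof -
  assume L: "L > 0" "\<bar>\<xi>\<bar> \<le> L"
  have a: "\<bar>\<xi>/L\<bar> \<le> 1" using L by (simp add: abs_divide)
  have "(\<xi>/L)^2 \<le> 1" using a by (metis abs_le_square_iff abs_one one_power2)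
  moreover have "0 \<le> (\<xi>/L)^2" by simp
  ultimately show ?thesis using a unfolding cw_def by linarith
qed

lemma cut_bounds:
  assumes L: "L > 0" "\<bar>\<xi>\<bar> \<le> L"
  shows "0 \<le> cutf L \<xi>" "cutf L \<xi> \<le> 1" "\<bar>cutf1 L \<xi>\<bar> \<le> 8 / L" "\<bar>cutf1 L \<xi>\<bar> \<le> 8 * \<bar>\<xi>\<bar> / L^2"
    "\<bar>cutf2 L \<xi>\<bar> \<le> 56 / L^2" "\<bar>cutf3 L \<xi>\<bar> \<le> 336 / L^3"
proof -
  define a where "a = \<xi>/L"
  define w where "w = cw L \<xi>"
  have b: "0 \<le> w" "w \<le> 1" "\<bar>a\<bar> \<le> 1" using cw_bounds[OF L] unfolding a_def w_def by auto
  have cf: "cutf L \<xi> = w^4" by (simp add: cutf_def w_def)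
  show "0 \<le> cutf L \<xi>" unfolding cf using b by simp
  show "cutf L \<xi> \<le> 1" unfolding cf using b by (intro power_le_one) auto
  have c1: "\<bar>cutf1 L \<xi>\<bar> = (8/L) * (\<bar>a\<bar> * w^3)"
  proof -
    have "cutf1 L \<xi> = -(8/L) * (a * w^3)" by (simp add: cutf1_def a_def w_def)
    then show ?thesis using L b by (simp add: abs_mult)
  qed
  have w3: "w^3 \<le> 1" using b by (intro power_le_one) auto
  have aw: "\<bar>a\<bar> * w^3 \<le> \<bar>a\<bar>" using w3 by (intro mult_left_le) auto
  have aw1: "\<bar>a\<bar> * w^3 \<le> 1" using aw b by linarith
  have L8: "8/L > 0" using L by simp
  show "\<bar>cutf1 L \<xi>\<bar> \<le> 8 / L" unfolding c1 using mult_left_mono[OF aw1, of "8/L"] L8 by simp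
  have "\<bar>cutf1 L \<xi>\<bar> \<le> (8/L) * \<bar>a\<bar>" unfolding c1 using mult_left_mono[OF aw, of "8/L"] L8 by simp
  also have "(8/L) * \<bar>a\<bar> = 8 * \<bar>\<xi>\<bar> / L^2" using L by (simp add: a_def abs_divide power2_eq_square)
  finally show "\<bar>cutf1 L \<xi>\<bar> \<le> 8 * \<bar>\<xi>\<bar> / L^2" .
  have t1: "\<bar>a^2 * w^2\<bar> \<le> 1" "\<bar>a^0 * w^3\<bar> \<le> 1" "\<bar>a^1 * w^2\<bar> \<le> 1" "\<bar>a^3 * w^1\<bar> \<le> 1"
    using aw_le1[OF b(3,1,2)] by blast+
  have "\<bar>48 * (a^2 * w^2) - 8 * (a^0 * w^3)\<bar> \<le> 48 * \<bar>a^2 * w^2\<bar> + 8 * \<bar>a^0 * w^3\<bar>"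
    by (rule order_trans[OF abs_triangle_ineq4]) (simp add: abs_mult)
  also have "\<dots> \<le> 56" using t1 by linarith
  finally have k2: "\<bar>48 * (a^2 * w^2) - 8 * (a^0 * w^3)\<bar> \<le> 56" .
  have e2: "cutf2 L \<xi> = (1/L^2) * (48 * (a^2 * w^2) - 8 * (a^0 * w^3))"
    by (simp add: cutf2_def a_def w_def)
  have "\<bar>cutf2 L \<xi>\<bar> = (1/L^2) * \<bar>48 * (a^2 * w^2) - 8 * (a^0 * w^3)\<bar>"
    unfolding e2 by (simp add: abs_mult)
  also have "\<dots> \<le> (1/L^2) * 56" using k2 by (intro mult_left_mono) auto
  finally show "\<bar>cutf2 L \<xi>\<bar> \<le> 56 / L^2" by simp
  have "\<bar>144 * (a^1 * w^2) - 192 * (a^3 * w^1)\<bar> \<le> 144 * \<bar>a^1 * w^2\<bar> + 192 * \<bar>a^3 * w^1\<bar>"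
    by (rule order_trans[OF abs_triangle_ineq4]) (simp add: abs_mult)
  also have "\<dots> \<le> 336" using t1 by linarith
  finally have k3: "\<bar>144 * (a^1 * w^2) - 192 * (a^3 * w^1)\<bar> \<le> 336" .
  have e3: "cutf3 L \<xi> = (1/L^3) * (144 * (a^1 * w^2) - 192 * (a^3 * w^1))"
    by (simp add: cutf3_def a_def w_def)
  have "\<bar>cutf3 L \<xi>\<bar> = (1/L^3) * \<bar>144 * (a^1 * w^2) - 192 * (a^3 * w^1)\<bar>"
    unfolding e3 using L by (simp add: abs_mult)
  also have "\<dots> \<le> (1/L^3) * 336" using k3 L by (intro mult_left_mono) auto
  finally show "\<bar>cutf3 L \<xi>\<bar> \<le> 336 / L^3" by simp
qed

lemma cut_lim: "((\<lambda>n. cutf (real n + 1) \<xi>) \<longlongrightarrow> 1) sequentially"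
proof -
  have f1: "filterlim (\<lambda>n. real (Suc n)) at_top sequentially"
    by (simp only: filterlim_sequentially_Suc filterlim_real_sequentially)
  have f2: "filterlim (\<lambda>n. real n + 1) at_infinity sequentially"
    using filterlim_at_top_imp_at_infinity[OF f1] by (simp add: add.commute)
  have "((\<lambda>n. \<xi> / (real n + 1)) \<longlongrightarrow> 0) sequentially"
    by (rule tendsto_divide_0[OF tendsto_const f2])
  then have "((\<lambda>n. (1 - (\<xi> / (real n + 1))^2)^4) \<longlongrightarrow> (1 - 0^2)^4) sequentially"
    by (intro tendsto_intros)
  then show ?thesis by (simp add: cutf_def cw_def)
qed

lemma cont_cut[continuous_intros]: "continuous_on S (cutf L)" "continuous_on S (cutf1 L)"
   "continuous_on S (cutf2 L)" "continuous_on S (cutf3 L)"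
  unfolding cutf_def[abs_def] cutf1_def[abs_def] cutf2_def[abs_def] cutf3_def[abs_def] cw_def divide_inverse
  by (intro continuous_intros)+




lemma Bc_bounded: assumes "F \<in> Bc" shows "\<exists>B. \<forall>x. \<bar>F x\<bar> \<le> B"
proof -
  from assms obtain L where c: "continuous_on UNIV F" and lt: "(F \<longlongrightarrow> L) at_top"
    and lb: "(F \<longlongrightarrow> 0) at_bot" unfolding Bc_def by auto
  have "eventually (\<lambda>x. dist (F x) L < 1) at_top" using lt by (rule tendstoD) simp
  then obtain X1 where X1: "\<And>x. x \<ge> X1 \<Longrightarrow> dist (F x) L < 1" by (auto simp: eventually_at_top_linorder)
  have "eventually (\<lambda>x. dist (F x) 0 < 1) at_bot" using lb by (rule tendstoD) simp
  then obtain X2 where X2: "\<And>x. x \<le> X2 \<Longrightarrow> dist (F x) 0 < 1" by (auto simp: eventually_at_bot_linorder)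
  have "compact (F ` {X2..X1})" by (rule compact_continuous_image) (use c continuous_on_subset in auto)
  hence "bounded (F ` {X2..X1})" by (rule compact_imp_bounded)
  then obtain B0 where B0': "\<forall>y\<in>F ` {X2..X1}. norm y \<le> B0" unfolding bounded_iff by blast
  have B0: "\<And>y. y \<in> F ` {X2..X1} \<Longrightarrow> norm y \<le> B0" using B0' by blast
  have "\<bar>F x\<bar> \<le> max B0 (max (\<bar>L\<bar> + 1) 1)" for x
  proof (cases "x \<le> X2")
    case True then show ?thesis using X2[OF True] by (simp add: dist_real_def)
  next
    case False
    show ?thesis
    proof (cases "x \<ge> X1")
      case True then show ?thesis using X1[OF True] by (simp add: dist_real_def)
    next
      case False2: False
      then have "x \<in> {X2..X1}" using False by auto
      then show ?thesis using B0[of "F x"] by auto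
    qed
  qed
  then show ?thesis by blast
qed

lemma prim_unique:
  assumes "Ac_primitive F g" shows "primitive g = F"
proof -
  have uniq: "G = F" if G: "Ac_primitive G g" for G
  proof -
    have dG: "\<And>x. (G has_real_derivative g x) (at x)" and dF: "\<And>x. (F has_real_derivative g x) (at x)"
      using G assms by (auto simp: Ac_primitive_def)
    have d: "\<And>x. ((\<lambda>x. G x - F x) has_real_derivative 0) (at x)"
      using DERIV_diff[OF dG dF] by simp
    have const: "G x - F x = G y - F y" for x y
      using DERIV_isconst_all d by blast
    have "((\<lambda>x. G x - F x) \<longlongrightarrow> 0 - 0) at_bot"
      using G assms by (intro tendsto_diff) (auto simp: Ac_primitive_def Bc_def)
    moreover have "((\<lambda>x. G x - F x) \<longlongrightarrow> G z - F z) at_bot" for z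
    proof -
      have "(\<lambda>x. G x - F x) = (\<lambda>x. G z - F z)" using const by blast
      then show ?thesis by simp
    qed
    ultimately have "G z - F z = 0 - 0" for z
      by (rule tendsto_unique[OF trivial_limit_at_bot_linorder, rotated])
    then show ?thesis by (auto simp: fun_eq_iff)
  qed
  show ?thesis unfolding primitive_def
    by (rule the_equality[where P="\<lambda>F. Ac_primitive F g", OF assms]) (rule uniq)
qed

lemma alex_le:
  assumes B: "\<And>x. \<bar>D x\<bar> \<le> B" and lim: "(D \<longlongrightarrow> 0) at_bot"
  shows "\<bar>D \<xi>\<bar> \<le> alex_norm D"
proof -
  have bdd: "bdd_above ((\<lambda>p. \<bar>D (snd p) - D (fst p)\<bar>) ` {(x, y). x < y})"
  proof (rule bdd_aboveI2[where M="2*B"])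
    fix p :: "real \<times> real"
    show "\<bar>D (snd p) - D (fst p)\<bar> \<le> 2*B" using B[of "fst p"] B[of "snd p"] by linarith
  qed
  have le: "\<bar>D \<xi> - D x\<bar> \<le> alex_norm D" if "x < \<xi>" for x
    unfolding alex_norm_def using that
    by (intro cSUP_upper2[OF bdd, of "(x, \<xi>)"]) auto
  have "((\<lambda>x. \<bar>D \<xi> - D x\<bar>) \<longlongrightarrow> \<bar>D \<xi> - 0\<bar>) at_bot"
    by (intro tendsto_intros lim)
  moreover have "eventually (\<lambda>x. \<bar>D \<xi> - D x\<bar> \<le> alex_norm D) at_bot"
    using le unfolding eventually_at_bot_linorder by (intro exI[of _ "\<xi> - 1"]) auto
  ultimately have "\<bar>D \<xi> - 0\<bar> \<le> alex_norm D"
    by (intro tendsto_upperbound) (auto simp: trivial_limit_at_bot_linorder)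
  then show ?thesis by simp
qed




lemma ibp_zero:
  fixes f g f' g' :: "real \<Rightarrow> real"
  assumes ab: "a \<le> b"
    and df: "\<And>x. (f has_real_derivative f' x) (at x)"
    and dg: "\<And>x. (g has_real_derivative g' x) (at x)"
    and cf': "continuous_on {a..b} f'" and cg': "continuous_on {a..b} g'"
    and za: "f a * g a = 0" and zb: "f b * g b = 0"
  shows "integral {a..b} (\<lambda>x. f' x * g x) = - integral {a..b} (\<lambda>x. f x * g' x)"
proof -
  have cf: "continuous_on {a..b} f" using df
    by (intro continuous_at_imp_continuous_on ballI DERIV_isCont) auto
  have cg: "continuous_on {a..b} g" using dg
    by (intro continuous_at_imp_continuous_on ballI DERIV_isCont) auto
  have "((\<lambda>x. f' x * g x + f x * g' x) has_integral (f b * g b - f a * g a)) {a..b}"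
  proof (rule fundamental_theorem_of_calculus[OF ab])
    fix x assume "x \<in> {a..b}"
    have "((\<lambda>x. f x * g x) has_real_derivative (f' x * g x + f x * g' x)) (at x)"
      using DERIV_mult[OF df dg] by (simp add: mult.commute)
    then show "((\<lambda>x. f x * g x) has_vector_derivative (f' x * g x + f x * g' x)) (at x within {a..b})"
      by (simp add: has_real_derivative_iff_has_vector_derivative has_vector_derivative_at_within)
  qed
  hence "integral {a..b} (\<lambda>x. f' x * g x + f x * g' x) = 0" using za zb by (simp add: integral_unique)
  moreover have "integral {a..b} (\<lambda>x. f' x * g x + f x * g' x) =
      integral {a..b} (\<lambda>x. f' x * g x) + integral {a..b} (\<lambda>x. f x * g' x)"
    by (intro integral_add integrable_continuous_interval continuous_intros cf cg cf' cg')
  ultimately show ?thesis by simp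
qed

lemma key_ibp:
  fixes V u0 u1 u2 c c1 c2 c3 \<Phi> p1 p2 p3 :: "real \<Rightarrow> real"
  assumes ab: "a \<le> b"
    and dV: "\<And>x. (V has_real_derivative u0 x) (at x)"
    and du0: "\<And>x. (u0 has_real_derivative u1 x) (at x)"
    and du1: "\<And>x. (u1 has_real_derivative u2 x) (at x)"
    and cu2: "continuous_on {a..b} u2"
    and dc: "\<And>x. (c has_real_derivative c1 x) (at x)"
    and dc1: "\<And>x. (c1 has_real_derivative c2 x) (at x)"
    and dc2: "\<And>x. (c2 has_real_derivative c3 x) (at x)"
    and cc3: "continuous_on {a..b} c3"
    and dP: "\<And>x. (\<Phi> has_real_derivative p1 x) (at x)"
    and dp1: "\<And>x. (p1 has_real_derivative p2 x) (at x)"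
    and dp2: "\<And>x. (p2 has_real_derivative p3 x) (at x)"
    and cp3: "continuous_on {a..b} p3"
    and za: "c a = 0" "c1 a = 0" "c2 a = 0" and zb: "c b = 0" "c1 b = 0" "c2 b = 0"
  shows "integral {a..b} (\<lambda>x. u2 x * (c x * \<Phi> x) - u0 x * (c x * p2 x)) =
          - integral {a..b} (\<lambda>x. V x * (c3 x * \<Phi> x + 3 * c2 x * p1 x + 2 * c1 x * p2 x))"
    and "integral {a..b} (\<lambda>x. u0 x * (c x * \<Phi> x)) = - integral {a..b} (\<lambda>x. V x * (c1 x * \<Phi> x + c x * p1 x))"
proof -
  have cont: "continuous_on {a..b} h" if "\<And>x. (h has_real_derivative h' x) (at x)" for h h'
    using that by (intro continuous_at_imp_continuous_on ballI DERIV_isCont) auto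
  note cs = cont[OF dV] cont[OF du0] cont[OF du1] cont[OF dc] cont[OF dc1] cont[OF dc2]
      cont[OF dP] cont[OF dp1] cont[OF dp2] cu2 cc3 cp3
  have d\<psi>0: "((\<lambda>x. c x * \<Phi> x) has_real_derivative (c1 x * \<Phi> x + c x * p1 x)) (at x)" for x
    by (rule derivative_eq_intros dc dP refl)+ simp
  have d\<psi>1: "((\<lambda>x. c1 x * \<Phi> x + c x * p1 x) has_real_derivative
      (c2 x * \<Phi> x + 2 * c1 x * p1 x + c x * p2 x)) (at x)" for x
    by (rule derivative_eq_intros dc dP dc1 dp1 refl)+ (simp add: algebra_simps)
  have dh: "((\<lambda>x. c2 x * \<Phi> x + 2 * c1 x * p1 x) has_real_derivative
      (c3 x * \<Phi> x + 3 * c2 x * p1 x + 2 * c1 x * p2 x)) (at x)" for x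
    by (rule derivative_eq_intros dc2 dP dc1 dp1 refl)+ (simp add: algebra_simps)
  have i1: "integral {a..b} (\<lambda>x. u2 x * (c x * \<Phi> x)) = - integral {a..b} (\<lambda>x. u1 x * (c1 x * \<Phi> x + c x * p1 x))"
    by (rule ibp_zero[OF ab du1 d\<psi>0]) (use za zb in \<open>auto intro!: continuous_intros cs\<close>)
  have i2: "integral {a..b} (\<lambda>x. u1 x * (c1 x * \<Phi> x + c x * p1 x)) =
      - integral {a..b} (\<lambda>x. u0 x * (c2 x * \<Phi> x + 2 * c1 x * p1 x + c x * p2 x))"
    by (rule ibp_zero[OF ab du0 d\<psi>1]) (use za zb in \<open>auto intro!: continuous_intros cs\<close>)
  have i3: "integral {a..b} (\<lambda>x. u0 x * (c2 x * \<Phi> x + 2 * c1 x * p1 x)) =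
      - integral {a..b} (\<lambda>x. V x * (c3 x * \<Phi> x + 3 * c2 x * p1 x + 2 * c1 x * p2 x))"
    by (rule ibp_zero[OF ab dV dh]) (use za zb in \<open>auto intro!: continuous_intros cs\<close>)
  have i4: "integral {a..b} (\<lambda>x. u0 x * (c2 x * \<Phi> x + 2 * c1 x * p1 x + c x * p2 x)) =
      integral {a..b} (\<lambda>x. u0 x * (c2 x * \<Phi> x + 2 * c1 x * p1 x)) + integral {a..b} (\<lambda>x. u0 x * (c x * p2 x))"
    by (subst integral_add[symmetric]) (auto intro!: integrable_continuous_interval continuous_intros cs simp: algebra_simps)
  have i5: "integral {a..b} (\<lambda>x. u2 x * (c x * \<Phi> x) - u0 x * (c x * p2 x)) =
      integral {a..b} (\<lambda>x. u2 x * (c x * \<Phi> x)) - integral {a..b} (\<lambda>x. u0 x * (c x * p2 x))"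
    by (intro integral_diff integrable_continuous_interval continuous_intros cs)
  show "integral {a..b} (\<lambda>x. u2 x * (c x * \<Phi> x) - u0 x * (c x * p2 x)) =
          - integral {a..b} (\<lambda>x. V x * (c3 x * \<Phi> x + 3 * c2 x * p1 x + 2 * c1 x * p2 x))"
    using i1 i2 i3 i4 i5 by simp
  show "integral {a..b} (\<lambda>x. u0 x * (c x * \<Phi> x)) = - integral {a..b} (\<lambda>x. V x * (c1 x * \<Phi> x + c x * p1 x))"
    by (rule ibp_zero[OF ab dV d\<psi>0]) (use za zb in \<open>auto intro!: continuous_intros cs\<close>)
qed




lemma cont_swap:
  assumes "continuous_on (UNIV \<times> {0<..}) (\<lambda>(x, t). w x t)" "S \<subseteq> {0<..}"
  shows "continuous_on (S \<times> A) (\<lambda>p. w (snd p) (fst p))"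
proof -
  have "continuous_on (S \<times> A) ((\<lambda>(x, t). w x t) \<circ> (\<lambda>p. (snd p, fst p)))"
    by (rule continuous_on_compose[OF _ continuous_on_subset[OF assms(1)]])
       (use assms(2) in \<open>auto intro!: continuous_intros\<close>)
  then show ?thesis by (simp add: o_def)
qed


lemma cont_hk3[continuous_intros]:
  assumes "continuous_on S f" "continuous_on S g" "\<And>x. x \<in> S \<Longrightarrow> f x > 0"
  shows "continuous_on S (\<lambda>x. hk3 (f x) (g x))"
  unfolding hk3_def using assms
  by (intro continuous_intros) (auto dest: assms(3))

lemma refl_deriv:
  assumes "\<And>y. (f has_real_derivative f' y) (at y)"
  shows "((\<lambda>\<xi>. f (x0 - \<xi>)) has_real_derivative - f' (x0 - \<xi>)) (at \<xi>)"
proof -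
  have dg: "((\<lambda>\<xi>. x0 - \<xi>) has_real_derivative -1) (at \<xi>)" by (auto intro!: derivative_eq_intros)
  show ?thesis using DERIV_chain2[where f=f, OF assms dg] by simp
qed

lemma Phi_derivs:
  assumes "\<tau> > 0"
  shows "((\<lambda>\<xi>. heat_kernel \<tau> (x0-\<xi>)) has_real_derivative - hk1 \<tau> (x0-\<xi>)) (at \<xi>)"
    "((\<lambda>\<xi>. - hk1 \<tau> (x0-\<xi>)) has_real_derivative hk2 \<tau> (x0-\<xi>)) (at \<xi>)"
    "((\<lambda>\<xi>. hk2 \<tau> (x0-\<xi>)) has_real_derivative - hk3 \<tau> (x0-\<xi>)) (at \<xi>)"
  using refl_deriv[of "heat_kernel \<tau>", OF d_eta0[OF assms]]
    DERIV_minus[OF refl_deriv[of "hk1 \<tau>", OF d_eta1[OF assms]]]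
    refl_deriv[of "hk2 \<tau>", OF d_eta2[OF assms]] by auto

locale hset =
  fixes u ux uxx ut U :: "real \<Rightarrow> real \<Rightarrow> real" and M :: real and Ff :: "real \<Rightarrow> real"
  assumes cont_u: "continuous_on (UNIV \<times> {0<..}) (\<lambda>(x, t). u x t)"
    and cont_ux: "continuous_on (UNIV \<times> {0<..}) (\<lambda>(x, t). ux x t)"
    and cont_uxx: "continuous_on (UNIV \<times> {0<..}) (\<lambda>(x, t). uxx x t)"
    and cont_ut: "continuous_on (UNIV \<times> {0<..}) (\<lambda>(x, t). ut x t)"
    and der_x: "\<And>x t. t > 0 \<Longrightarrow> ((\<lambda>y. u y t) has_real_derivative ux x t) (at x)"
    and der_xx: "\<And>x t. t > 0 \<Longrightarrow> ((\<lambda>y. ux y t) has_real_derivative uxx x t) (at x)"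
    and der_t: "\<And>x t. t > 0 \<Longrightarrow> ((\<lambda>s. u x s) has_real_derivative ut x t) (at t)"
    and heat: "\<And>x t. t > 0 \<Longrightarrow> ut x t - uxx x t = 0"
    and U_der: "\<And>s x. s > 0 \<Longrightarrow> (U s has_real_derivative u x s) (at x)"
    and U_bd: "\<And>s x. s > 0 \<Longrightarrow> \<bar>U s x\<bar> \<le> M"
    and U_init: "\<And>x. ((\<lambda>s. U s x) \<longlongrightarrow> Ff x) (at_right 0)"
    and Ff_cont: "continuous_on UNIV Ff"
begin

lemma J_deriv:
  assumes T: "T > 0" and s: "0 < s" "s < T"
  shows "((\<lambda>s. integral {-L..L} (\<lambda>\<xi>. u \<xi> s * (cutf L \<xi> * heat_kernel (T - s) (x0 - \<xi>)))) has_real_derivative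
     integral {-L..L} (\<lambda>\<xi>. ut \<xi> s * (cutf L \<xi> * heat_kernel (T - s) (x0 - \<xi>)) +
        u \<xi> s * (cutf L \<xi> * (- hk2 (T - s) (x0 - \<xi>))))) (at s)"
proof -
  let ?U = "{0<..<T}"
  have sub: "?U \<subseteq> {0<..}" by auto
  have d: "((\<lambda>s. u \<xi> s * (cutf L \<xi> * heat_kernel (T - s) (x0 - \<xi>))) has_field_derivative
     ut \<xi> s * (cutf L \<xi> * heat_kernel (T - s) (x0 - \<xi>)) +
        u \<xi> s * (cutf L \<xi> * (- hk2 (T - s) (x0 - \<xi>)))) (at s within ?U)" if "s \<in> ?U" for s \<xi>
  proof -
    have s0: "s > 0" "T - s > 0" using that by auto
    have dk: "((\<lambda>s. heat_kernel (T - s) (x0 - \<xi>)) has_real_derivative hk2 (T - s) (x0 - \<xi>) * (-1)) (at s)"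
    proof -
      have dg: "((\<lambda>s. T - s) has_real_derivative -1) (at s)" by (auto intro!: derivative_eq_intros)
      show ?thesis using DERIV_chain2[where f="\<lambda>\<tau>. heat_kernel \<tau> (x0 - \<xi>)", OF d_tau0[OF s0(2)] dg] by simp
    qed
    show ?thesis
      by (rule has_field_derivative_at_within)
         (use DERIV_mult[OF der_t[OF s0(1)] DERIV_cmult[OF dk, of "cutf L \<xi>"]] in \<open>simp add: algebra_simps\<close>)
  qed
  have int: "(\<lambda>\<xi>. u \<xi> s * (cutf L \<xi> * heat_kernel (T - s) (x0 - \<xi>))) integrable_on cbox (-L) L"
    if "s \<in> ?U" for s
  proof -
    have s0: "s > 0" "T - s > 0" using that by auto
    have "continuous_on {-L..L} (\<lambda>\<xi>. u \<xi> s)"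
      by (intro continuous_at_imp_continuous_on ballI DERIV_isCont[OF der_x[OF s0(1)]])
    then show ?thesis unfolding cbox_interval
      by (intro integrable_continuous_interval continuous_intros) (use s0 in auto)
  qed
  have cont: "continuous_on (?U \<times> cbox (-L) L) (\<lambda>(s, \<xi>). ut \<xi> s * (cutf L \<xi> * heat_kernel (T - s) (x0 - \<xi>)) +
        u \<xi> s * (cutf L \<xi> * (- hk2 (T - s) (x0 - \<xi>))))"
  proof -
    have c1: "continuous_on (?U \<times> cbox (-L) L) (\<lambda>p. ut (snd p) (fst p))"
      by (rule cont_swap[OF cont_ut sub])
    have c2: "continuous_on (?U \<times> cbox (-L) L) (\<lambda>p. u (snd p) (fst p))"
      by (rule cont_swap[OF cont_u sub])
    have c3: "continuous_on (?U \<times> cbox (-L) L) (\<lambda>p. cutf L (snd p))"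
      by (rule continuous_on_compose2[OF cont_cut(1)[of UNIV L]]) (auto intro!: continuous_intros)
    show ?thesis unfolding split_beta'
      by (intro continuous_intros c1 c2 c3) auto
  qed
  have "((\<lambda>s. integral (cbox (-L) L) (\<lambda>\<xi>. u \<xi> s * (cutf L \<xi> * heat_kernel (T - s) (x0 - \<xi>)))) has_field_derivative
     integral (cbox (-L) L) (\<lambda>\<xi>. ut \<xi> s * (cutf L \<xi> * heat_kernel (T - s) (x0 - \<xi>)) +
        u \<xi> s * (cutf L \<xi> * (- hk2 (T - s) (x0 - \<xi>))))) (at s within ?U)"
    by (rule leibniz_rule_field_derivative[OF d int cont]) (use s in auto)
  then show ?thesis unfolding cbox_interval
    using at_within_open[of s ?U] s by auto
qed


definition Jf where "Jf T x0 L s = integral {-L..L} (\<lambda>\<xi>. u \<xi> s * (cutf L \<xi> * heat_kernel (T - s) (x0 - \<xi>)))"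

lemma J_eqs:
  assumes T: "T > 0" and s: "0 < s" "s < T" and L: "L > 0"
  shows "integral {-L..L} (\<lambda>\<xi>. ut \<xi> s * (cutf L \<xi> * heat_kernel (T - s) (x0 - \<xi>)) +
        u \<xi> s * (cutf L \<xi> * (- hk2 (T - s) (x0 - \<xi>)))) =
    - integral {-L..L} (\<lambda>\<xi>. U s \<xi> * (cutf3 L \<xi> * heat_kernel (T - s) (x0 - \<xi>) +
        3 * cutf2 L \<xi> * (- hk1 (T - s) (x0 - \<xi>)) + 2 * cutf1 L \<xi> * hk2 (T - s) (x0 - \<xi>)))"
   and "Jf T x0 L s = - integral {-L..L} (\<lambda>\<xi>. U s \<xi> * (cutf1 L \<xi> * heat_kernel (T - s) (x0 - \<xi>) +
        cutf L \<xi> * (- hk1 (T - s) (x0 - \<xi>))))"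
proof -
  have tp: "T - s > 0" using s by simp
  have L0: "L \<noteq> 0" using L by simp
  have cuxx: "continuous_on {-L..L} (\<lambda>\<xi>. uxx \<xi> s)"
    by (rule continuous_on_compose2[OF cont_uxx, of _ "\<lambda>\<xi>. (\<xi>, s)", simplified])
       (use s in \<open>auto intro!: continuous_intros\<close>)
  have c3: "continuous_on {-L..L} (\<lambda>\<xi>. - hk3 (T - s) (x0 - \<xi>))"
    by (intro continuous_intros) (use tp in auto)
  note z1 = cut_zero[OF L0, of "-L"] and z2 = cut_zero[OF L0, of L]
  note K = key_ibp[of "-L" L "U s" "\<lambda>\<xi>. u \<xi> s" "\<lambda>\<xi>. ux \<xi> s" "\<lambda>\<xi>. uxx \<xi> s"
      "cutf L" "cutf1 L" "cutf2 L" "cutf3 L" "\<lambda>\<xi>. heat_kernel (T - s) (x0 - \<xi>)"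
      "\<lambda>\<xi>. - hk1 (T - s) (x0 - \<xi>)" "\<lambda>\<xi>. hk2 (T - s) (x0 - \<xi>)" "\<lambda>\<xi>. - hk3 (T - s) (x0 - \<xi>)",
      OF _ U_der[OF s(1)] der_x[OF s(1)] der_xx[OF s(1)] cuxx d_cut0[OF L0] d_cut1[OF L0] d_cut2[OF L0]
      cont_cut(4) Phi_derivs[OF tp]]
  have K1: "integral {-L..L} (\<lambda>x. uxx x s * (cutf L x * heat_kernel (T - s) (x0 - x)) -
         u x s * (cutf L x * hk2 (T - s) (x0 - x))) =
    - integral {-L..L} (\<lambda>x. U s x * (cutf3 L x * heat_kernel (T - s) (x0 - x) +
         3 * cutf2 L x * - hk1 (T - s) (x0 - x) + 2 * cutf1 L x * hk2 (T - s) (x0 - x)))"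
   and K2: "integral {-L..L} (\<lambda>x. u x s * (cutf L x * heat_kernel (T - s) (x0 - x))) =
    - integral {-L..L} (\<lambda>x. U s x * (cutf1 L x * heat_kernel (T - s) (x0 - x) + cutf L x * - hk1 (T - s) (x0 - x)))"
    using K[OF _ c3] z1 z2 L by auto
  have "integral {-L..L} (\<lambda>\<xi>. ut \<xi> s * (cutf L \<xi> * heat_kernel (T - s) (x0 - \<xi>)) +
        u \<xi> s * (cutf L \<xi> * (- hk2 (T - s) (x0 - \<xi>)))) =
    integral {-L..L} (\<lambda>x. uxx x s * (cutf L x * heat_kernel (T - s) (x0 - x)) -
         u x s * (cutf L x * hk2 (T - s) (x0 - x)))"
    using heat[OF s(1)] by (intro integral_cong) (auto simp: algebra_simps)
  then show "integral {-L..L} (\<lambda>\<xi>. ut \<xi> s * (cutf L \<xi> * heat_kernel (T - s) (x0 - \<xi>)) +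
        u \<xi> s * (cutf L \<xi> * (- hk2 (T - s) (x0 - \<xi>)))) =
    - integral {-L..L} (\<lambda>\<xi>. U s \<xi> * (cutf3 L \<xi> * heat_kernel (T - s) (x0 - \<xi>) +
        3 * cutf2 L \<xi> * (- hk1 (T - s) (x0 - \<xi>)) + 2 * cutf1 L \<xi> * hk2 (T - s) (x0 - \<xi>)))"
    using K1 by simp
  show "Jf T x0 L s = - integral {-L..L} (\<lambda>\<xi>. U s \<xi> * (cutf1 L \<xi> * heat_kernel (T - s) (x0 - \<xi>) +
        cutf L \<xi> * (- hk1 (T - s) (x0 - \<xi>))))"
    using K2 by (simp add: Jf_def)
qed


lemma M_nonneg: "M \<ge> 0"
  using U_bd[of 1 0] by simp

lemma integrand_bound:
  fixes B L \<tau> \<xi> x0 :: real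
  assumes L: "L \<ge> 1" "\<bar>\<xi>\<bar> \<le> L" and tp: "\<tau> > 0"
    and Bb: "heat_kernel \<tau> (x0 - \<xi>) \<le> B" "\<bar>hk1 \<tau> (x0 - \<xi>)\<bar> \<le> B" "(1 + \<bar>x0 - \<xi>\<bar>) * \<bar>hk2 \<tau> (x0 - \<xi>)\<bar> \<le> B"
  shows "\<bar>cutf3 L \<xi> * heat_kernel \<tau> (x0 - \<xi>) + 3 * cutf2 L \<xi> * (- hk1 \<tau> (x0 - \<xi>)) + 2 * cutf1 L \<xi> * hk2 \<tau> (x0 - \<xi>)\<bar>
      \<le> (520 + 16 * \<bar>x0\<bar>) * B / L^2"
proof -
  have L0: "L > 0" using L by simp
  note cb = cut_bounds[OF L0 L(2)]
  have hk0: "0 \<le> heat_kernel \<tau> (x0 - \<xi>)" using hk_pos[OF tp] by (simp add: less_imp_le)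
  have B0: "0 \<le> B" using hk0 Bb(1) by simp
  have L32: "336 / L^3 \<le> 336 / L^2"
    using L by (intro divide_left_mono) (auto simp: power_increasing)
  have t1: "\<bar>cutf3 L \<xi> * heat_kernel \<tau> (x0 - \<xi>)\<bar> \<le> 336 / L^2 * B"
  proof -
    have "\<bar>cutf3 L \<xi> * heat_kernel \<tau> (x0 - \<xi>)\<bar> = \<bar>cutf3 L \<xi>\<bar> * heat_kernel \<tau> (x0 - \<xi>)"
      using hk0 by (simp add: abs_mult)
    also have "\<dots> \<le> (336 / L^2) * B" using cb(6) L32 Bb(1) hk0 by (intro mult_mono) auto
    finally show ?thesis .
  qed
  have t2: "\<bar>3 * cutf2 L \<xi> * (- hk1 \<tau> (x0 - \<xi>))\<bar> \<le> 168 / L^2 * B"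
  proof -
    have "\<bar>3 * cutf2 L \<xi> * (- hk1 \<tau> (x0 - \<xi>))\<bar> = 3 * (\<bar>cutf2 L \<xi>\<bar> * \<bar>hk1 \<tau> (x0 - \<xi>)\<bar>)"
      by (simp add: abs_mult)
    also have "\<dots> \<le> 3 * ((56 / L^2) * B)" using cb(5) Bb(2) by (intro mult_left_mono mult_mono) auto
    finally show ?thesis by simp
  qed
  have xi: "\<bar>\<xi>\<bar> \<le> (1 + \<bar>x0\<bar>) * (1 + \<bar>x0 - \<xi>\<bar>)"
  proof -
    have "\<bar>\<xi>\<bar> \<le> \<bar>x0\<bar> + \<bar>x0 - \<xi>\<bar>" by linarith
    also have "\<dots> \<le> (1 + \<bar>x0\<bar>) * (1 + \<bar>x0 - \<xi>\<bar>)"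
      by (simp add: algebra_simps)
    finally show ?thesis .
  qed
  have xh: "\<bar>\<xi>\<bar> * \<bar>hk2 \<tau> (x0 - \<xi>)\<bar> \<le> (1 + \<bar>x0\<bar>) * B"
  proof -
    have "\<bar>\<xi>\<bar> * \<bar>hk2 \<tau> (x0 - \<xi>)\<bar> \<le> (1 + \<bar>x0\<bar>) * (1 + \<bar>x0 - \<xi>\<bar>) * \<bar>hk2 \<tau> (x0 - \<xi>)\<bar>"
      using xi by (intro mult_right_mono) auto
    also have "\<dots> = (1 + \<bar>x0\<bar>) * ((1 + \<bar>x0 - \<xi>\<bar>) * \<bar>hk2 \<tau> (x0 - \<xi>)\<bar>)" by simp
    also have "\<dots> \<le> (1 + \<bar>x0\<bar>) * B" using Bb(3) by (intro mult_left_mono) auto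
    finally show ?thesis .
  qed
  have t3: "\<bar>2 * cutf1 L \<xi> * hk2 \<tau> (x0 - \<xi>)\<bar> \<le> 16 * (1 + \<bar>x0\<bar>) * B / L^2"
  proof -
    have "\<bar>2 * cutf1 L \<xi> * hk2 \<tau> (x0 - \<xi>)\<bar> = 2 * (\<bar>cutf1 L \<xi>\<bar> * \<bar>hk2 \<tau> (x0 - \<xi>)\<bar>)"
      by (simp add: abs_mult)
    also have "\<dots> \<le> 2 * ((8 * \<bar>\<xi>\<bar> / L^2) * \<bar>hk2 \<tau> (x0 - \<xi>)\<bar>)"
      using cb(4) by (intro mult_left_mono mult_right_mono) auto
    also have "\<dots> = 16 * (\<bar>\<xi>\<bar> * \<bar>hk2 \<tau> (x0 - \<xi>)\<bar>) / L^2" by simp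
    also have "\<dots> \<le> 16 * ((1 + \<bar>x0\<bar>) * B) / L^2"
      using xh by (intro divide_right_mono mult_left_mono) auto
    also have "\<dots> = 16 * (1 + \<bar>x0\<bar>) * B / L^2" by simp
    finally show ?thesis .
  qed
  have "\<bar>cutf3 L \<xi> * heat_kernel \<tau> (x0 - \<xi>) + 3 * cutf2 L \<xi> * (- hk1 \<tau> (x0 - \<xi>)) + 2 * cutf1 L \<xi> * hk2 \<tau> (x0 - \<xi>)\<bar>
     \<le> 336 / L^2 * B + 168 / L^2 * B + 16 * (1 + \<bar>x0\<bar>) * B / L^2"
    using t1 t2 t3 by linarith
  also have "\<dots> = (520 + 16 * \<bar>x0\<bar>) * B / L^2" unfolding divide_inverse by (simp add: algebra_simps)
  finally show ?thesis .
qed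

lemma J_lip:
  assumes T: "T > 0" and ab: "0 < a" "a \<le> b" "b < T"
  shows "\<exists>C. \<forall>L\<ge>1. \<bar>Jf T x0 L b - Jf T x0 L a\<bar> \<le> C / L * (b - a)"
proof -
  obtain B where Bp: "B > 0" and Bb: "\<And>\<tau> \<eta>. T - b \<le> \<tau> \<Longrightarrow> \<tau> \<le> T \<Longrightarrow>
     heat_kernel \<tau> \<eta> \<le> B \<and> \<bar>hk1 \<tau> \<eta>\<bar> \<le> B \<and> (1 + \<bar>\<eta>\<bar>) * \<bar>hk2 \<tau> \<eta>\<bar> \<le> B"
    using hk_bounds[of "T - b" T] ab by auto
  define K where "K = (520 + 16 * \<bar>x0\<bar>) * B"
  have K0: "K \<ge> 0" using Bp by (simp add: K_def)
  have "\<bar>Jf T x0 L b - Jf T x0 L a\<bar> \<le> (2 * M * K) / L * (b - a)" if L: "L \<ge> 1" for L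
  proof -
    have L0: "L > 0" using L by simp
    define D where "D s = integral {-L..L} (\<lambda>\<xi>. ut \<xi> s * (cutf L \<xi> * heat_kernel (T - s) (x0 - \<xi>)) +
        u \<xi> s * (cutf L \<xi> * (- hk2 (T - s) (x0 - \<xi>))))" for s
    have dJ: "(Jf T x0 L has_real_derivative D s) (at s within {a..b})" if s: "s \<in> {a..b}" for s
      unfolding Jf_def[abs_def] D_def
      by (rule has_field_derivative_at_within, rule J_deriv) (use s ab in auto)
    have Db: "norm (D s) \<le> 2 * M * K / L" if s: "s \<in> {a..b}" for s
    proof -
      have s0: "0 < s" "s < T" using s ab by auto
      have tp: "T - s > 0" using s0 by simp
      let ?g = "\<lambda>\<xi>. U s \<xi> * (cutf3 L \<xi> * heat_kernel (T - s) (x0 - \<xi>) +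
        3 * cutf2 L \<xi> * (- hk1 (T - s) (x0 - \<xi>)) + 2 * cutf1 L \<xi> * hk2 (T - s) (x0 - \<xi>))"
      have DE: "D s = - integral {-L..L} ?g" unfolding D_def by (rule J_eqs(1)[OF T s0 L0])
      have cU: "continuous_on {-L..L} (U s)"
        by (intro continuous_at_imp_continuous_on ballI DERIV_isCont[OF U_der[OF s0(1)]])
      have gi: "(?g has_integral integral {-L..L} ?g) (cbox (-L) L)"
        unfolding cbox_interval
        by (intro integrable_integral integrable_continuous_interval continuous_intros cU) (use tp in auto)
      have pb: "norm (?g \<xi>) \<le> M * (K / L^2)" if xi: "\<xi> \<in> cbox (-L) L" for \<xi>
      proof -
        have xL: "\<bar>\<xi>\<bar> \<le> L" using xi by auto
        have "norm (?g \<xi>) = \<bar>U s \<xi>\<bar> * \<bar>cutf3 L \<xi> * heat_kernel (T - s) (x0 - \<xi>) +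
          3 * cutf2 L \<xi> * (- hk1 (T - s) (x0 - \<xi>)) + 2 * cutf1 L \<xi> * hk2 (T - s) (x0 - \<xi>)\<bar>"
          by (simp add: abs_mult)
        also have "\<dots> \<le> M * (K / L^2)"
          using U_bd[OF s0(1)] integrand_bound[OF L xL tp, of x0 B] Bb[of "T - s" "x0 - \<xi>"] s ab M_nonneg
          by (intro mult_mono) (auto simp: K_def)
        finally show ?thesis .
      qed
      have "norm (integral {-L..L} ?g) \<le> M * (K / L^2) * measure lborel (cbox (-L) L)"
        by (rule has_integral_bound[OF _ gi pb]) (use M_nonneg K0 in auto)
      also have "measure lborel (cbox (-L) L) = 2 * L" using L0 by simp
      also have "M * (K / L^2) * (2 * L) = 2 * M * K / L" using L0 by (simp add: power2_eq_square field_simps)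
      finally show ?thesis using DE by simp
    qed
    have "norm (Jf T x0 L b - Jf T x0 L a) \<le> 2 * M * K / L * norm (b - a)"
      by (rule field_differentiable_bound[OF convex_real_interval(5) dJ Db]) (use ab in auto)
    then show ?thesis using ab by simp
  qed
  then show ?thesis by blast
qed

end



lemma hk1_normal: "\<tau> > 0 \<Longrightarrow> hk1 \<tau> (x0 - \<xi>) = (\<xi> - x0) / (2*\<tau>) * normal_density x0 (sqrt (2*\<tau>)) \<xi>"
  unfolding hk1_def hk_normal by (simp add: field_simps)

lemma hk_integrable: "\<tau> > 0 \<Longrightarrow> integrable lborel (\<lambda>\<xi>. heat_kernel \<tau> (x0 - \<xi>))"
  by (simp add: hk_normal)

lemma hk_integral: "\<tau> > 0 \<Longrightarrow> (\<integral>\<xi>. heat_kernel \<tau> (x0 - \<xi>) \<partial>lborel) = 1"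
  by (simp add: hk_normal)

lemma hk1_abs_integrable: "\<tau> > 0 \<Longrightarrow> integrable lborel (\<lambda>\<xi>. \<bar>hk1 \<tau> (x0 - \<xi>)\<bar>)"
proof -
  assume t: "\<tau> > 0"
  have "integrable lborel (\<lambda>\<xi>. (1/(2*\<tau>)) * (normal_density x0 (sqrt (2*\<tau>)) \<xi> * \<bar>\<xi> - x0\<bar>^1))"
    using integrable_normal_moment_abs[of "sqrt (2*\<tau>)" x0 1] t by simp
  moreover have "(\<lambda>\<xi>. (1/(2*\<tau>)) * (normal_density x0 (sqrt (2*\<tau>)) \<xi> * \<bar>\<xi> - x0\<bar>^1)) = (\<lambda>\<xi>. \<bar>hk1 \<tau> (x0 - \<xi>)\<bar>)"
    using t by (auto simp: hk1_normal abs_mult fun_eq_iff)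
  ultimately show ?thesis by simp
qed

lemma hk1_integrable: "\<tau> > 0 \<Longrightarrow> integrable lborel (\<lambda>\<xi>. hk1 \<tau> (x0 - \<xi>))"
proof -
  assume t: "\<tau> > 0"
  have "integrable lborel (\<lambda>\<xi>. (1/(2*\<tau>)) * (normal_density x0 (sqrt (2*\<tau>)) \<xi> * (\<xi> - x0)^1))"
    using integrable_normal_moment[of "sqrt (2*\<tau>)" x0 1] t by simp
  moreover have "(\<lambda>\<xi>. (1/(2*\<tau>)) * (normal_density x0 (sqrt (2*\<tau>)) \<xi> * (\<xi> - x0)^1)) = (\<lambda>\<xi>. hk1 \<tau> (x0 - \<xi>))"
    using t by (auto simp: hk1_normal fun_eq_iff)
  ultimately show ?thesis by simp
qed

lemma hk1_measurable[measurable]: "(\<lambda>\<xi>. hk1 \<tau> (x0 - \<xi>)) \<in> borel_measurable borel"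
  unfolding hk1_def heat_kernel_def by measurable

lemma hk_measurable[measurable]: "(\<lambda>\<xi>. heat_kernel \<tau> (x0 - \<xi>)) \<in> borel_measurable borel"
  unfolding heat_kernel_def by measurable

lemma cut_measurable[measurable]: "cutf L \<in> borel_measurable borel"
  by (rule borel_measurable_continuous_onI) (rule cont_cut)

context hset begin

definition Ifn where "Ifn T x0 s = (\<integral>\<xi>. U s \<xi> * hk1 (T - s) (x0 - \<xi>) \<partial>lborel)"

lemma U_cont: "s > 0 \<Longrightarrow> continuous_on UNIV (U s)"
  by (intro continuous_at_imp_continuous_on ballI DERIV_isCont[OF U_der]) auto

lemma U_measurable[measurable]: "s > 0 \<Longrightarrow> U s \<in> borel_measurable borel"
  by (rule borel_measurable_continuous_onI[OF U_cont])

lemma HK_to_L: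
  fixes f :: "real \<Rightarrow> real"
  assumes "continuous_on {a..b} f"
  shows "integral {a..b} f = (\<integral>x. indicator {a..b} x * f x \<partial>lborel)"
  using set_borel_integral_eq_integral(2)[OF borel_integrable_atLeastAtMost'[OF assms]]
  by (simp add: set_lebesgue_integral_def)

lemma hk_interval_le1:
  assumes tp: "\<tau> > 0"
  shows "integral {a..b} (\<lambda>\<xi>. heat_kernel \<tau> (x0 - \<xi>)) \<le> 1"
proof -
  have "integral {a..b} (\<lambda>\<xi>. heat_kernel \<tau> (x0 - \<xi>)) = (\<integral>x. indicator {a..b} x * heat_kernel \<tau> (x0 - x) \<partial>lborel)"
    by (rule HK_to_L) (use tp in \<open>auto intro!: continuous_intros\<close>)
  also have "\<dots> \<le> (\<integral>x. heat_kernel \<tau> (x0 - x) \<partial>lborel)"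
  proof (rule integral_mono)
    show "integrable lborel (\<lambda>x. heat_kernel \<tau> (x0 - x))" by (rule hk_integrable[OF tp])
    show "integrable lborel (\<lambda>x. indicator {a..b} x * heat_kernel \<tau> (x0 - x))"
      by (rule Bochner_Integration.integrable_bound[OF hk_integrable[OF tp]]) (use hk_pos[OF tp] in \<open>auto simp: indicator_def\<close>)
    show "indicator {a..b} x * heat_kernel \<tau> (x0 - x) \<le> heat_kernel \<tau> (x0 - x)" for x
      using hk_pos[OF tp, of "x0 - x"] by (auto simp: indicator_def)
  qed
  also have "\<dots> = 1" by (rule hk_integral[OF tp])
  finally show ?thesis .
qed

lemma J_lim:
  assumes T: "T > 0" and s: "0 < s" "s < T"
  shows "(\<lambda>n. Jf T x0 (real n + 1) s) \<longlonglongrightarrow> Ifn T x0 s"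
proof -
  have tp: "T - s > 0" using s by simp
  define Ln where "Ln n = real n + 1" for n :: nat
  have Lp: "Ln n \<ge> 1" for n by (simp add: Ln_def)
  define A where "A n = integral {-Ln n..Ln n} (\<lambda>\<xi>. U s \<xi> * (cutf (Ln n) \<xi> * hk1 (T - s) (x0 - \<xi>)))" for n
  define B where "B n = integral {-Ln n..Ln n} (\<lambda>\<xi>. U s \<xi> * (cutf1 (Ln n) \<xi> * heat_kernel (T - s) (x0 - \<xi>)))" for n
  have cU: "continuous_on S (U s)" for S using U_cont[OF s(1)] continuous_on_subset by blast
  have JAB: "Jf T x0 (Ln n) s = A n - B n" for n
  proof -
    have L0: "Ln n > 0" using Lp[of n] by simp
    have "Jf T x0 (Ln n) s = - integral {-Ln n..Ln n} (\<lambda>\<xi>. U s \<xi> * (cutf1 (Ln n) \<xi> * heat_kernel (T - s) (x0 - \<xi>)) -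
        U s \<xi> * (cutf (Ln n) \<xi> * hk1 (T - s) (x0 - \<xi>)))"
      using J_eqs(2)[OF T s L0, of x0] by (simp add: algebra_simps)
    also have "\<dots> = A n - B n" unfolding A_def B_def
      by (subst integral_diff) (use tp in \<open>auto intro!: integrable_continuous_interval continuous_intros cU\<close>)
    finally show ?thesis .
  qed
  have Alim: "A \<longlonglongrightarrow> Ifn T x0 s"
  proof -
    have A': "A n = (\<integral>\<xi>. indicator {-Ln n..Ln n} \<xi> * (U s \<xi> * (cutf (Ln n) \<xi> * hk1 (T - s) (x0 - \<xi>))) \<partial>lborel)" for n
      unfolding A_def by (rule HK_to_L) (use tp in \<open>auto intro!: continuous_intros cU\<close>)
    show ?thesis unfolding A' Ifn_def
    proof (rule integral_dominated_convergence[where w="\<lambda>\<xi>. M * \<bar>hk1 (T - s) (x0 - \<xi>)\<bar>"])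
      show "(\<lambda>\<xi>. U s \<xi> * hk1 (T - s) (x0 - \<xi>)) \<in> borel_measurable lborel" using s by measurable
      show "(\<lambda>\<xi>. indicator {-Ln n..Ln n} \<xi> * (U s \<xi> * (cutf (Ln n) \<xi> * hk1 (T - s) (x0 - \<xi>)))) \<in> borel_measurable lborel" for n
        using s by measurable
      show "integrable lborel (\<lambda>\<xi>. M * \<bar>hk1 (T - s) (x0 - \<xi>)\<bar>)"
        using hk1_abs_integrable[OF tp] by simp
      show "AE \<xi> in lborel. (\<lambda>n. indicator {-Ln n..Ln n} \<xi> * (U s \<xi> * (cutf (Ln n) \<xi> * hk1 (T - s) (x0 - \<xi>))))
             \<longlonglongrightarrow> U s \<xi> * hk1 (T - s) (x0 - \<xi>)"
      proof (rule AE_I2)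
        fix \<xi> :: real
        have ev: "eventually (\<lambda>n. indicator {-Ln n..Ln n} \<xi> = (1::real)) sequentially"
        proof -
          obtain N :: nat where "\<bar>\<xi>\<bar> \<le> real N" using real_arch_simple by blast
          then show ?thesis unfolding eventually_sequentially Ln_def
            by (intro exI[of _ N]) (auto simp: indicator_def)
        qed
        have "(\<lambda>n. 1 * (U s \<xi> * (cutf (Ln n) \<xi> * hk1 (T - s) (x0 - \<xi>)))) \<longlonglongrightarrow> 1 * (U s \<xi> * (1 * hk1 (T - s) (x0 - \<xi>)))"
          by (intro tendsto_intros) (use cut_lim[of \<xi>] in \<open>simp add: Ln_def\<close>)
        then have "(\<lambda>n. 1 * (U s \<xi> * (cutf (Ln n) \<xi> * hk1 (T - s) (x0 - \<xi>)))) \<longlonglongrightarrow> U s \<xi> * hk1 (T - s) (x0 - \<xi>)"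
          by simp
        then show "(\<lambda>n. indicator {-Ln n..Ln n} \<xi> * (U s \<xi> * (cutf (Ln n) \<xi> * hk1 (T - s) (x0 - \<xi>))))
             \<longlonglongrightarrow> U s \<xi> * hk1 (T - s) (x0 - \<xi>)"
          by (rule Lim_transform_eventually) (rule eventually_mono[OF ev], simp)
      qed
      show "AE \<xi> in lborel. norm (indicator {-Ln n..Ln n} \<xi> * (U s \<xi> * (cutf (Ln n) \<xi> * hk1 (T - s) (x0 - \<xi>))))
          \<le> M * \<bar>hk1 (T - s) (x0 - \<xi>)\<bar>" for n
      proof (rule AE_I2)
        fix \<xi> :: real
        show "norm (indicator {-Ln n..Ln n} \<xi> * (U s \<xi> * (cutf (Ln n) \<xi> * hk1 (T - s) (x0 - \<xi>))))
          \<le> M * \<bar>hk1 (T - s) (x0 - \<xi>)\<bar>"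
        proof (cases "\<xi> \<in> {-Ln n..Ln n}")
          case True
          then have xL: "\<bar>\<xi>\<bar> \<le> Ln n" by auto
          have L0: "Ln n > 0" using Lp[of n] by simp
          note cb = cut_bounds[OF L0 xL]
          have "norm (indicator {-Ln n..Ln n} \<xi> * (U s \<xi> * (cutf (Ln n) \<xi> * hk1 (T - s) (x0 - \<xi>))))
              = \<bar>U s \<xi>\<bar> * (cutf (Ln n) \<xi> * \<bar>hk1 (T - s) (x0 - \<xi>)\<bar>)"
            using True cb(1) by (simp add: abs_mult)
          also have "\<dots> \<le> M * (1 * \<bar>hk1 (T - s) (x0 - \<xi>)\<bar>)"
            using U_bd[OF s(1)] cb M_nonneg by (intro mult_mono) auto
          finally show ?thesis by simp
        next
          case False then show ?thesis using M_nonneg by simp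
        qed
      qed
    qed
  qed
  have Blim: "B \<longlonglongrightarrow> 0"
  proof (rule Lim_null_comparison)
    show "eventually (\<lambda>n. norm (B n) \<le> 8 * M / Ln n) sequentially"
    proof (rule always_eventually, rule allI)
      fix n
      have L0: "Ln n > 0" using Lp[of n] by simp
      have "norm (B n) \<le> integral {-Ln n..Ln n} (\<lambda>\<xi>. (8 * M / Ln n) * heat_kernel (T - s) (x0 - \<xi>))"
        unfolding B_def
      proof (rule Henstock_Kurzweil_Integration.integral_norm_bound_integral)
        show "(\<lambda>\<xi>. U s \<xi> * (cutf1 (Ln n) \<xi> * heat_kernel (T - s) (x0 - \<xi>))) integrable_on {-Ln n..Ln n}"
          by (intro integrable_continuous_interval continuous_intros cU) (use tp in auto)
        show "(\<lambda>\<xi>. (8 * M / Ln n) * heat_kernel (T - s) (x0 - \<xi>)) integrable_on {-Ln n..Ln n}"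
          by (intro integrable_continuous_interval continuous_intros) (use tp in auto)
        fix \<xi> assume "\<xi> \<in> {-Ln n..Ln n}"
        then have xL: "\<bar>\<xi>\<bar> \<le> Ln n" by auto
        note cb = cut_bounds[OF L0 xL]
        have hk0: "heat_kernel (T - s) (x0 - \<xi>) \<ge> 0" using hk_pos[OF tp] by (simp add: less_imp_le)
        have "norm (U s \<xi> * (cutf1 (Ln n) \<xi> * heat_kernel (T - s) (x0 - \<xi>))) =
            \<bar>U s \<xi>\<bar> * (\<bar>cutf1 (Ln n) \<xi>\<bar> * heat_kernel (T - s) (x0 - \<xi>))"
          using hk0 by (simp add: abs_mult)
        also have "\<dots> \<le> M * ((8 / Ln n) * heat_kernel (T - s) (x0 - \<xi>))"
          using U_bd[OF s(1)] cb hk0 M_nonneg L0 by (intro mult_mono) auto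
        finally show "norm (U s \<xi> * (cutf1 (Ln n) \<xi> * heat_kernel (T - s) (x0 - \<xi>)))
            \<le> (8 * M / Ln n) * heat_kernel (T - s) (x0 - \<xi>)" by (simp add: algebra_simps)
      qed
      also have "\<dots> = (8 * M / Ln n) * integral {-Ln n..Ln n} (\<lambda>\<xi>. heat_kernel (T - s) (x0 - \<xi>))"
        by simp
      also have "\<dots> \<le> (8 * M / Ln n) * 1"
        using hk_interval_le1[OF tp] M_nonneg L0 by (intro mult_left_mono) auto
      finally show "norm (B n) \<le> 8 * M / Ln n" by simp
    qed
    have "(\<lambda>n. 8 * M / Ln n) \<longlonglongrightarrow> 0"
    proof -
      have f1: "filterlim (\<lambda>n. real (Suc n)) at_top sequentially"
        by (simp only: filterlim_sequentially_Suc filterlim_real_sequentially)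
      have f2: "filterlim Ln at_infinity sequentially"
      proof -
        have "Ln = (\<lambda>n. 1 + real n)" by (auto simp: Ln_def fun_eq_iff)
        then show ?thesis using filterlim_at_top_imp_at_infinity[OF f1] by simp
      qed
      show ?thesis by (rule tendsto_divide_0[OF tendsto_const f2])
    qed
    then show "(\<lambda>n. 8 * M / Ln n) \<longlonglongrightarrow> 0" .
  qed
  have "(\<lambda>n. A n - B n) \<longlonglongrightarrow> Ifn T x0 s - 0" by (intro tendsto_diff Alim Blim)
  then show ?thesis using JAB by (simp add: Ln_def)
qed

end



lemma hk1_dom:
  assumes t: "T/2 \<le> \<tau>" "\<tau> \<le> T" "T > 0"
  shows "\<bar>hk1 \<tau> \<eta>\<bar> \<le> (2/T) * \<bar>\<eta>\<bar> * heat_kernel T \<eta>"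
proof -
  have tp: "\<tau> > 0" using t by simp
  have e: "exp (-(\<eta>^2) / (4*\<tau>)) \<le> exp (-(\<eta>^2) / (4*T))"
  proof -
    have "\<eta>^2/(4*T) \<le> \<eta>^2/(4*\<tau>)" by (rule divide_left_mono) (use t tp in auto)
    then show ?thesis by simp
  qed
  have s2: "sqrt 2 \<le> (2::real)"
  proof -
    have "sqrt 2 \<le> sqrt (4::real)" by (rule real_sqrt_le_mono) simp
    then show ?thesis by (simp add: real_sqrt_four)
  qed
  have s: "1 / sqrt (4*pi*\<tau>) \<le> 2 / sqrt (4*pi*T)"
  proof -
    have "sqrt (4*pi*T) \<le> sqrt (4*pi*(2*\<tau>))" by (rule real_sqrt_le_mono) (use t in auto)
    also have "\<dots> = sqrt 2 * sqrt (4*pi*\<tau>)" by (simp add: real_sqrt_mult[symmetric] ac_simps)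
    also have "\<dots> \<le> 2 * sqrt (4*pi*\<tau>)" by (rule mult_right_mono[OF s2]) (use tp in simp)
    finally have A: "sqrt (4*pi*T) \<le> 2 * sqrt (4*pi*\<tau>)" .
    have P1: "sqrt (4*pi*T) > 0" "sqrt (4*pi*\<tau>) > 0" using t tp by auto
    show ?thesis using A P1 by (simp add: divide_simps)
  qed
  have hk: "heat_kernel \<tau> \<eta> \<le> 2 * heat_kernel T \<eta>"
  proof -
    have "heat_kernel \<tau> \<eta> = (1 / sqrt (4*pi*\<tau>)) * exp (-(\<eta>^2) / (4*\<tau>))" using hk_eq[OF tp] by simp
    also have "\<dots> \<le> (2 / sqrt (4*pi*T)) * exp (-(\<eta>^2) / (4*T))"
      by (rule mult_mono[OF s e]) (use t in auto)
    also have "\<dots> = 2 * heat_kernel T \<eta>" using hk_eq[of T \<eta>] t by simp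
    finally show ?thesis .
  qed
  have h0: "0 \<le> heat_kernel \<tau> \<eta>" using hk_pos[OF tp, of \<eta>] by simp
  have q: "\<bar>\<eta>\<bar> / (2*\<tau>) \<le> \<bar>\<eta>\<bar> / T" by (rule divide_left_mono) (use t in auto)
  have "\<bar>hk1 \<tau> \<eta>\<bar> = (\<bar>\<eta>\<bar> / (2*\<tau>)) * heat_kernel \<tau> \<eta>"
    unfolding hk1_def using tp h0 by (simp add: abs_mult)
  also have "\<dots> \<le> (\<bar>\<eta>\<bar> / T) * (2 * heat_kernel T \<eta>)"
    by (rule mult_mono[OF q hk]) (use t h0 in auto)
  also have "\<dots> = (2/T) * \<bar>\<eta>\<bar> * heat_kernel T \<eta>" by simp
  finally show ?thesis .
qed

context hset begin

lemma I_const: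
  assumes T: "T > 0" and ab: "0 < a" "a \<le> b" "b < T"
  shows "Ifn T x0 a = Ifn T x0 b"
proof -
  obtain C where C: "\<And>L. L \<ge> 1 \<Longrightarrow> \<bar>Jf T x0 L b - Jf T x0 L a\<bar> \<le> C / L * (b - a)"
    using J_lip[OF T ab, of x0] by blast
  have l1: "(\<lambda>n. Jf T x0 (real n + 1) b - Jf T x0 (real n + 1) a) \<longlonglongrightarrow> Ifn T x0 b - Ifn T x0 a"
    using ab by (intro tendsto_diff J_lim T) auto
  have l2: "(\<lambda>n. Jf T x0 (real n + 1) b - Jf T x0 (real n + 1) a) \<longlonglongrightarrow> 0"
  proof (rule Lim_null_comparison)
    show "eventually (\<lambda>n. norm (Jf T x0 (real n + 1) b - Jf T x0 (real n + 1) a) \<le> C * (b - a) / (real n + 1)) sequentially"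
    proof (intro always_eventually allI)
      fix n
      have "norm (Jf T x0 (real n + 1) b - Jf T x0 (real n + 1) a) \<le> C / (real n + 1) * (b - a)"
        using C[of "real n + 1"] by simp
      also have "\<dots> = C * (b - a) / (real n + 1)" by simp
      finally show "norm (Jf T x0 (real n + 1) b - Jf T x0 (real n + 1) a) \<le> C * (b - a) / (real n + 1)" .
    qed
    have f1: "filterlim (\<lambda>n. real (Suc n)) at_top sequentially"
      by (simp only: filterlim_sequentially_Suc filterlim_real_sequentially)
    have f2: "filterlim (\<lambda>n. real n + 1) at_infinity sequentially"
      using filterlim_at_top_imp_at_infinity[OF f1] by (simp add: add.commute)
    show "(\<lambda>n. C * (b - a) / (real n + 1)) \<longlonglongrightarrow> 0" by (rule tendsto_divide_0[OF tendsto_const f2])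
  qed
  have "Ifn T x0 b - Ifn T x0 a = 0" using LIMSEQ_unique[OF l1 l2] .
  then show ?thesis by simp
qed

lemma Ff_bd: "\<bar>Ff x\<bar> \<le> M"
proof -
  have "((\<lambda>s. \<bar>U s x\<bar>) \<longlongrightarrow> \<bar>Ff x\<bar>) (at_right 0)" by (intro tendsto_intros U_init)
  moreover have "eventually (\<lambda>s. \<bar>U s x\<bar> \<le> M) (at_right (0::real))"
    using eventually_at_right_real[OF zero_less_one] by (rule eventually_mono) (auto intro: U_bd)
  ultimately show ?thesis by (intro tendsto_upperbound) auto
qed

lemma I_lim0:
  assumes T: "T > 0"
  shows "((\<lambda>s. Ifn T x0 s) \<longlongrightarrow> (\<integral>\<xi>. Ff \<xi> * hk1 T (x0 - \<xi>) \<partial>lborel)) (at_right 0)"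
proof (rule tendsto_at_right_sequentially[of 0 "T/2"])
  show "0 < T/2" using T by simp
  fix S :: "nat \<Rightarrow> real" assume S: "\<And>n. 0 < S n" "\<And>n. S n < T/2" "S \<longlonglongrightarrow> 0"
  have Sf: "filterlim S (at_right 0) sequentially"
    using S by (intro tendsto_imp_filterlim_at_right) (auto intro: always_eventually)
  show "(\<lambda>n. Ifn T x0 (S n)) \<longlonglongrightarrow> (\<integral>\<xi>. Ff \<xi> * hk1 T (x0 - \<xi>) \<partial>lborel)"
    unfolding Ifn_def
  proof (rule integral_dominated_convergence[where w="\<lambda>\<xi>. M * ((2/T) * \<bar>x0 - \<xi>\<bar> * heat_kernel T (x0 - \<xi>))"])
    have cF: "Ff \<in> borel_measurable borel" by (rule borel_measurable_continuous_onI[OF Ff_cont])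
    show "(\<lambda>\<xi>. Ff \<xi> * hk1 T (x0 - \<xi>)) \<in> borel_measurable lborel" using cF by measurable
    show "(\<lambda>\<xi>. U (S n) \<xi> * hk1 (T - S n) (x0 - \<xi>)) \<in> borel_measurable lborel" for n
      using S(1)[of n] by measurable
    have "integrable lborel (\<lambda>\<xi>. (M * (2/T)) * (normal_density x0 (sqrt (2*T)) \<xi> * \<bar>\<xi> - x0\<bar>^1))"
      using integrable_normal_moment_abs[of "sqrt (2*T)" x0 1] T by simp
    moreover have "(\<lambda>\<xi>. (M * (2/T)) * (normal_density x0 (sqrt (2*T)) \<xi> * \<bar>\<xi> - x0\<bar>^1)) =
        (\<lambda>\<xi>. M * ((2/T) * \<bar>x0 - \<xi>\<bar> * heat_kernel T (x0 - \<xi>)))"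
      using T by (auto simp: hk_normal fun_eq_iff abs_minus_commute)
    ultimately show "integrable lborel (\<lambda>\<xi>. M * ((2/T) * \<bar>x0 - \<xi>\<bar> * heat_kernel T (x0 - \<xi>)))" by simp
    show "AE \<xi> in lborel. (\<lambda>n. U (S n) \<xi> * hk1 (T - S n) (x0 - \<xi>)) \<longlonglongrightarrow> Ff \<xi> * hk1 T (x0 - \<xi>)"
    proof (rule AE_I2)
      fix \<xi> :: real
      have u: "(\<lambda>n. U (S n) \<xi>) \<longlonglongrightarrow> Ff \<xi>" by (rule filterlim_compose[OF U_init Sf])
      have l: "(\<lambda>n. T - S n) \<longlonglongrightarrow> T - 0" by (intro tendsto_intros S)
      have c: "continuous_on {0<..} (\<lambda>\<tau>. hk1 \<tau> (x0 - \<xi>))"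
        by (intro continuous_intros) auto
      have "(\<lambda>n. hk1 (T - S n) (x0 - \<xi>)) \<longlonglongrightarrow> hk1 (T - 0) (x0 - \<xi>)"
      proof (rule continuous_on_tendsto_compose[OF c l])
        show "T - 0 \<in> {0<..}" using T by simp
        show "eventually (\<lambda>n. T - S n \<in> {0<..}) sequentially"
        proof (rule always_eventually, rule allI)
          fix n show "T - S n \<in> {0<..}" using S(2)[of n] T by simp
        qed
      qed
      then have "(\<lambda>n. hk1 (T - S n) (x0 - \<xi>)) \<longlonglongrightarrow> hk1 T (x0 - \<xi>)" by simp
      then show "(\<lambda>n. U (S n) \<xi> * hk1 (T - S n) (x0 - \<xi>)) \<longlonglongrightarrow> Ff \<xi> * hk1 T (x0 - \<xi>)"
        by (intro tendsto_intros u)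
    qed
    show "AE \<xi> in lborel. norm (U (S n) \<xi> * hk1 (T - S n) (x0 - \<xi>)) \<le> M * ((2/T) * \<bar>x0 - \<xi>\<bar> * heat_kernel T (x0 - \<xi>))" for n
    proof (rule AE_I2)
      fix \<xi> :: real
      have "norm (U (S n) \<xi> * hk1 (T - S n) (x0 - \<xi>)) = \<bar>U (S n) \<xi>\<bar> * \<bar>hk1 (T - S n) (x0 - \<xi>)\<bar>"
        by (simp add: abs_mult)
      also have "\<dots> \<le> M * ((2/T) * \<bar>x0 - \<xi>\<bar> * heat_kernel T (x0 - \<xi>))"
        using U_bd[OF S(1)[of n]] hk1_dom[of T "T - S n" "x0 - \<xi>"] S(1,2)[of n] T M_nonneg
        by (intro mult_mono) auto
      finally show "norm (U (S n) \<xi> * hk1 (T - S n) (x0 - \<xi>)) \<le> M * ((2/T) * \<bar>x0 - \<xi>\<bar> * heat_kernel T (x0 - \<xi>))" .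
    qed
  qed
qed

end



lemma gauss_facts:
  assumes t: "\<tau> > 0"
  shows "has_bochner_integral lborel (\<lambda>\<xi>. hk1 \<tau> (x0-\<xi>)) 0"
    "has_bochner_integral lborel (\<lambda>\<xi>. (\<xi> - x0) * hk1 \<tau> (x0-\<xi>)) 1"
    "has_bochner_integral lborel (\<lambda>\<xi>. \<bar>\<xi> - x0\<bar> * \<bar>hk1 \<tau> (x0-\<xi>)\<bar>) 1"
    "has_bochner_integral lborel (\<lambda>\<xi>. (\<xi> - x0)^2 * \<bar>hk1 \<tau> (x0-\<xi>)\<bar>) (2 * sqrt (2*\<tau>) * sqrt (2/pi))"
proof -
  define \<sigma> where "\<sigma> = sqrt (2*\<tau>)"
  have sp: "\<sigma> > 0" using t by (simp add: \<sigma>_def)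
  have s2: "\<sigma>^2 = 2*\<tau>" using t by (simp add: \<sigma>_def)
  have h1: "hk1 \<tau> (x0 - \<xi>) = (1/(2*\<tau>)) * (normal_density x0 \<sigma> \<xi> * (\<xi> - x0))" for \<xi>
    using hk1_normal[OF t, of x0 \<xi>] by (simp add: \<sigma>_def)
  have h1a: "\<bar>hk1 \<tau> (x0 - \<xi>)\<bar> = (1/(2*\<tau>)) * (normal_density x0 \<sigma> \<xi> * \<bar>\<xi> - x0\<bar>)" for \<xi>
    using t by (simp add: h1 abs_mult)
  show "has_bochner_integral lborel (\<lambda>\<xi>. hk1 \<tau> (x0-\<xi>)) 0"
    using has_bochner_integral_mult_right[OF normal_moment_odd[OF sp, of x0 0], of "1/(2*\<tau>)"]
    by (simp add: h1)
  show "has_bochner_integral lborel (\<lambda>\<xi>. (\<xi> - x0) * hk1 \<tau> (x0-\<xi>)) 1"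
  proof -
    have "has_bochner_integral lborel (\<lambda>\<xi>. (1/(2*\<tau>)) * (normal_density x0 \<sigma> \<xi> * (\<xi> - x0)^(2*1)))
        ((1/(2*\<tau>)) * (fact (2 * 1) / ((2 / \<sigma>\<^sup>2)^1 * fact 1)))"
      by (rule has_bochner_integral_mult_right[OF normal_moment_even[OF sp]])
    moreover have "(\<lambda>\<xi>. (1/(2*\<tau>)) * (normal_density x0 \<sigma> \<xi> * (\<xi> - x0)^(2*1))) = (\<lambda>\<xi>. (\<xi> - x0) * hk1 \<tau> (x0-\<xi>))"
      by (auto simp: h1 fun_eq_iff power2_eq_square)
    moreover have "(1/(2*\<tau>)) * (fact (2 * 1) / ((2 / \<sigma>\<^sup>2)^1 * fact 1)) = (1::real)"
      using t by (simp add: s2)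
    ultimately show ?thesis using sp by simp
  qed
  show "has_bochner_integral lborel (\<lambda>\<xi>. \<bar>\<xi> - x0\<bar> * \<bar>hk1 \<tau> (x0-\<xi>)\<bar>) 1"
  proof -
    have "has_bochner_integral lborel (\<lambda>\<xi>. (1/(2*\<tau>)) * (normal_density x0 \<sigma> \<xi> * (\<xi> - x0)^(2*1)))
        ((1/(2*\<tau>)) * (fact (2 * 1) / ((2 / \<sigma>\<^sup>2)^1 * fact 1)))"
      by (rule has_bochner_integral_mult_right[OF normal_moment_even[OF sp]])
    moreover have "(\<lambda>\<xi>. (1/(2*\<tau>)) * (normal_density x0 \<sigma> \<xi> * (\<xi> - x0)^(2*1))) = (\<lambda>\<xi>. \<bar>\<xi> - x0\<bar> * \<bar>hk1 \<tau> (x0-\<xi>)\<bar>)"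
      by (auto simp: h1a fun_eq_iff power2_eq_square abs_mult_self_eq)
    moreover have "(1/(2*\<tau>)) * (fact (2 * 1) / ((2 / \<sigma>\<^sup>2)^1 * fact 1)) = (1::real)"
      using t by (simp add: s2)
    ultimately show ?thesis using sp by simp
  qed
  show "has_bochner_integral lborel (\<lambda>\<xi>. (\<xi> - x0)^2 * \<bar>hk1 \<tau> (x0-\<xi>)\<bar>) (2 * sqrt (2*\<tau>) * sqrt (2/pi))"
  proof -
    have "has_bochner_integral lborel (\<lambda>\<xi>. (1/(2*\<tau>)) * (normal_density x0 \<sigma> \<xi> * \<bar>\<xi> - x0\<bar>^(2*1+1)))
        ((1/(2*\<tau>)) * (2^1 * \<sigma>^(2 * 1 + 1) * fact 1 * sqrt (2 / pi)))"
      by (rule has_bochner_integral_mult_right[OF normal_moment_abs_odd[OF sp]])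
    moreover have "(\<lambda>\<xi>. (1/(2*\<tau>)) * (normal_density x0 \<sigma> \<xi> * \<bar>\<xi> - x0\<bar>^(2*1+1))) = (\<lambda>\<xi>. (\<xi> - x0)^2 * \<bar>hk1 \<tau> (x0-\<xi>)\<bar>)"
      by (auto simp: h1a fun_eq_iff power2_eq_square power3_eq_cube abs_mult_self_eq)
    moreover have "(1/(2*\<tau>)) * (2^1 * \<sigma>^(2 * 1 + 1) * fact 1 * sqrt (2 / pi)) = 2 * sqrt (2*\<tau>) * sqrt (2/pi)"
    proof -
      have "\<sigma>^(2*1+1) = \<sigma>^2 * \<sigma>" by (simp add: power3_eq_cube power2_eq_square)
      then show ?thesis using t by (simp add: s2 \<sigma>_def)
    qed
    ultimately show ?thesis using sp by simp
  qed
qed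


context hset begin

lemma V_bound:
  assumes T: "T > 0" and \<delta>: "\<delta> > 0" "\<delta> \<le> T/2" and \<epsilon>: "\<epsilon> \<ge> 0"
   and cont: "\<And>\<zeta> b. \<bar>\<zeta> - x0\<bar> \<le> \<delta> \<Longrightarrow> T - \<delta> < b \<Longrightarrow> b < T \<Longrightarrow> \<bar>u \<zeta> b - u x0 T\<bar> \<le> \<epsilon>"
   and b: "T - \<delta> < b" "b < T"
  shows "\<bar>U b \<xi> - U b x0 - u x0 T * (\<xi> - x0)\<bar> \<le>
      \<epsilon> * \<bar>\<xi> - x0\<bar> + (2*M/\<delta>^2 + \<bar>u x0 T\<bar>/\<delta>) * (\<xi> - x0)^2"
proof -
  define u0 where "u0 = u x0 T"
  define D where "D = 2*M/\<delta>^2 + \<bar>u0\<bar>/\<delta>"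
  have b0: "b > 0" using b \<delta> by simp
  have D0: "D \<ge> 0" using M_nonneg \<delta> by (simp add: D_def)
  define V where "V \<xi> = U b \<xi> - U b x0 - u0 * (\<xi> - x0)" for \<xi>
  have dV: "(V has_real_derivative (u z b - u0)) (at z)" for z
    unfolding V_def[abs_def] by (auto intro!: derivative_eq_intros U_der[OF b0])
  show ?thesis
  proof (cases "\<bar>\<xi> - x0\<bar> \<le> \<delta>")
    case True
    define S where "S = {min x0 \<xi>..max x0 \<xi>}"
    have cS: "convex S" unfolding S_def by (rule convex_real_interval)
    have inS: "x0 \<in> S" "\<xi> \<in> S" unfolding S_def by auto
    have zS: "\<bar>z - x0\<bar> \<le> \<delta>" if "z \<in> S" for z
      using that True unfolding S_def by (auto simp: abs_if split: if_splits)
    have "norm (V \<xi> - V x0) \<le> \<epsilon> * norm (\<xi> - x0)"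
    proof (rule field_differentiable_bound[OF cS _ _ inS(2) inS(1)])
      show "(V has_field_derivative (u z b - u0)) (at z within S)" for z
        using dV by (rule has_field_derivative_at_within)
      show "norm (u z b - u0) \<le> \<epsilon>" if "z \<in> S" for z
        using cont[OF zS[OF that] b] by (simp add: u0_def)
    qed
    moreover have "V x0 = 0" by (simp add: V_def)
    ultimately have "\<bar>V \<xi>\<bar> \<le> \<epsilon> * \<bar>\<xi> - x0\<bar>" by simp
    moreover have "0 \<le> D * (\<xi> - x0)^2" using D0 by simp
    ultimately show ?thesis unfolding V_def D_def u0_def by linarith
  next
    case False
    define r where "r = \<bar>\<xi> - x0\<bar>"
    have r: "r > \<delta>" using False by (simp add: r_def)
    have r2: "(\<xi> - x0)^2 = r^2" by (simp add: r_def)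
    have "\<bar>V \<xi>\<bar> \<le> \<bar>U b \<xi>\<bar> + \<bar>U b x0\<bar> + \<bar>u0\<bar> * r"
      by (simp add: V_def r_def abs_mult[symmetric])
    also have "\<dots> \<le> 2 * M + \<bar>u0\<bar> * r" using U_bd[OF b0, of \<xi>] U_bd[OF b0, of x0] by simp
    also have "2 * M \<le> 2*M/\<delta>^2 * r^2"
    proof -
      have "1 \<le> r^2/\<delta>^2" using r \<delta> by (simp add: power_mono)
      then have "2 * M * 1 \<le> 2 * M * (r^2/\<delta>^2)" using M_nonneg by (intro mult_left_mono) auto
      then show ?thesis by simp
    qed
    also have "\<bar>u0\<bar> * r \<le> \<bar>u0\<bar>/\<delta> * r^2"
    proof -
      have "r \<le> r^2/\<delta>" using r \<delta> by (simp add: field_simps power2_eq_square)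
      then have "\<bar>u0\<bar> * r \<le> \<bar>u0\<bar> * (r^2/\<delta>)" by (intro mult_left_mono) auto
      then show ?thesis by simp
    qed
    finally have "\<bar>V \<xi>\<bar> \<le> D * (\<xi> - x0)^2" unfolding r2 D_def by (simp add: algebra_simps)
    moreover have "0 \<le> \<epsilon> * \<bar>\<xi> - x0\<bar>" using \<epsilon> by simp
    ultimately show ?thesis unfolding V_def D_def u0_def by linarith
  qed
qed


lemma I_near:
  assumes T: "T > 0" and \<delta>: "\<delta> > 0" "\<delta> \<le> T/2" and \<epsilon>: "\<epsilon> \<ge> 0"
   and cont: "\<And>\<zeta> b. \<bar>\<zeta> - x0\<bar> \<le> \<delta> \<Longrightarrow> T - \<delta> < b \<Longrightarrow> b < T \<Longrightarrow> \<bar>u \<zeta> b - u x0 T\<bar> \<le> \<epsilon>"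
   and b: "T - \<delta> < b" "b < T"
  shows "\<bar>Ifn T x0 b - u x0 T\<bar> \<le> \<epsilon> + (2*M/\<delta>^2 + \<bar>u x0 T\<bar>/\<delta>) * (2 * sqrt (2*(T-b)) * sqrt (2/pi))"
proof -
  define u0 where "u0 = u x0 T"
  define D where "D = 2*M/\<delta>^2 + \<bar>u0\<bar>/\<delta>"
  define \<tau> where "\<tau> = T - b"
  have tp: "\<tau> > 0" using b by (simp add: \<tau>_def)
  have b0: "b > 0" using b \<delta> by simp
  have D0: "D \<ge> 0" using M_nonneg \<delta> by (simp add: D_def)
  define V where "V \<xi> = U b \<xi> - U b x0 - u0 * (\<xi> - x0)" for \<xi>
  have Vb: "\<bar>V \<xi>\<bar> \<le> \<epsilon> * \<bar>\<xi> - x0\<bar> + D * (\<xi> - x0)^2" for \<xi>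
    using V_bound[OF T \<delta> \<epsilon> cont b, of \<xi>] by (simp add: V_def D_def u0_def)
  note g = gauss_facts[OF tp, of x0]
  have Vm[measurable]: "V \<in> borel_measurable borel" unfolding V_def[abs_def] using b0 by measurable
  define W where "W \<xi> = \<epsilon> * (\<bar>\<xi> - x0\<bar> * \<bar>hk1 \<tau> (x0-\<xi>)\<bar>) + D * ((\<xi> - x0)^2 * \<bar>hk1 \<tau> (x0-\<xi>)\<bar>)" for \<xi>
  have Wi: "has_bochner_integral lborel W (\<epsilon> * 1 + D * (2 * sqrt (2*\<tau>) * sqrt (2/pi)))"
    unfolding W_def[abs_def]
    by (intro has_bochner_integral_add has_bochner_integral_mult_right g(3,4))
  have VW: "\<bar>V \<xi> * hk1 \<tau> (x0-\<xi>)\<bar> \<le> W \<xi>" for \<xi>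
  proof -
    have "\<bar>V \<xi> * hk1 \<tau> (x0-\<xi>)\<bar> = \<bar>V \<xi>\<bar> * \<bar>hk1 \<tau> (x0-\<xi>)\<bar>" by (simp add: abs_mult)
    also have "\<dots> \<le> (\<epsilon> * \<bar>\<xi> - x0\<bar> + D * (\<xi> - x0)^2) * \<bar>hk1 \<tau> (x0-\<xi>)\<bar>"
      by (rule mult_right_mono[OF Vb]) simp
    also have "\<dots> = W \<xi>" by (simp add: W_def algebra_simps)
    finally show ?thesis .
  qed
  have Vhi: "integrable lborel (\<lambda>\<xi>. V \<xi> * hk1 \<tau> (x0-\<xi>))"
  proof (rule Bochner_Integration.integrable_bound[OF integrable.intros[OF Wi]])
    show "(\<lambda>\<xi>. V \<xi> * hk1 \<tau> (x0-\<xi>)) \<in> borel_measurable lborel" by measurable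
    show "AE x in lborel. norm (V x * hk1 \<tau> (x0 - x)) \<le> norm (W x)"
      by (intro AE_I2) (metis VW abs_ge_self order_trans real_norm_def)
  qed
  have i1: "integrable lborel (\<lambda>\<xi>. hk1 \<tau> (x0-\<xi>))" using g(1) by (rule integrable.intros)
  have i2: "integrable lborel (\<lambda>\<xi>. (\<xi> - x0) * hk1 \<tau> (x0-\<xi>))" using g(2) by (rule integrable.intros)
  have eq: "(\<lambda>\<xi>. U b \<xi> * hk1 (T - b) (x0 - \<xi>)) =
      (\<lambda>\<xi>. V \<xi> * hk1 \<tau> (x0-\<xi>) + (U b x0 * hk1 \<tau> (x0-\<xi>) + u0 * ((\<xi> - x0) * hk1 \<tau> (x0-\<xi>))))"
    by (auto simp: V_def \<tau>_def fun_eq_iff algebra_simps)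
  have "Ifn T x0 b = (\<integral>\<xi>. V \<xi> * hk1 \<tau> (x0-\<xi>) \<partial>lborel) +
      (U b x0 * (\<integral>\<xi>. hk1 \<tau> (x0-\<xi>) \<partial>lborel) + u0 * (\<integral>\<xi>. (\<xi> - x0) * hk1 \<tau> (x0-\<xi>) \<partial>lborel))"
    unfolding Ifn_def eq using Vhi i1 i2 by simp
  also have "\<dots> = (\<integral>\<xi>. V \<xi> * hk1 \<tau> (x0-\<xi>) \<partial>lborel) + u0"
    using has_bochner_integral_integral_eq[OF g(1)] has_bochner_integral_integral_eq[OF g(2)] by simp
  finally have Ie: "Ifn T x0 b - u0 = (\<integral>\<xi>. V \<xi> * hk1 \<tau> (x0-\<xi>) \<partial>lborel)" by simp
  have "\<bar>(\<integral>\<xi>. V \<xi> * hk1 \<tau> (x0-\<xi>) \<partial>lborel)\<bar> \<le> (\<integral>\<xi>. W \<xi> \<partial>lborel)"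
    by (rule integral_abs_bound_integral[OF Vhi integrable.intros[OF Wi]]) (rule VW)
  also have "\<dots> = \<epsilon> * 1 + D * (2 * sqrt (2*\<tau>) * sqrt (2/pi))"
    by (rule has_bochner_integral_integral_eq[OF Wi])
  finally show ?thesis using Ie by (simp add: u0_def D_def \<tau>_def)
qed

lemma I_limT:
  assumes T: "T > 0"
  shows "((\<lambda>b. Ifn T x0 b) \<longlongrightarrow> u x0 T) (at_left T)"
proof (rule tendstoI)
  fix e :: real assume e: "e > 0"
  define \<epsilon> where "\<epsilon> = e/3"
  have \<epsilon>p: "\<epsilon> > 0" using e by (simp add: \<epsilon>_def)
  obtain d where d: "d > 0" and dc: "\<And>p'. p' \<in> UNIV \<times> {0<..} \<Longrightarrow> dist p' (x0, T) < d \<Longrightarrow>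
      dist ((\<lambda>(x, t). u x t) p') ((\<lambda>(x, t). u x t) (x0, T)) < \<epsilon>"
    using cont_u[unfolded continuous_on_iff] T \<epsilon>p by (metis SigmaI UNIV_I greaterThan_iff)
  define \<delta> where "\<delta> = min (d/3) (T/2)"
  have \<delta>: "\<delta> > 0" "\<delta> \<le> T/2" using d T by (auto simp: \<delta>_def)
  have cont: "\<bar>u \<zeta> b - u x0 T\<bar> \<le> \<epsilon>" if "\<bar>\<zeta> - x0\<bar> \<le> \<delta>" "T - \<delta> < b" "b < T" for \<zeta> b
  proof -
    have b0: "b > 0" using that \<delta> by simp
    have "dist (\<zeta>, b) (x0, T) \<le> dist \<zeta> x0 + dist b T"
      unfolding dist_Pair_Pair by (rule sqrt_sum_squares_le_sum) auto
    also have "\<dots> < d"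
    proof -
      have "\<delta> \<le> d/3" by (simp add: \<delta>_def)
      then show ?thesis using that d by (auto simp: dist_real_def)
    qed
    finally have "dist (\<zeta>, b) (x0, T) < d" .
    from dc[OF _ this] b0 show ?thesis by (simp add: dist_real_def less_imp_le)
  qed
  define D where "D = 2*M/\<delta>^2 + \<bar>u x0 T\<bar>/\<delta>"
  have "((\<lambda>\<tau>. D * (2 * sqrt (2*\<tau>) * sqrt (2/pi))) \<longlongrightarrow> D * (2 * sqrt (2*0) * sqrt (2/pi))) (at_right 0)"
    by (intro tendsto_intros)
  then have "((\<lambda>\<tau>. D * (2 * sqrt (2*\<tau>) * sqrt (2/pi))) \<longlongrightarrow> 0) (at_right 0)" by simp
  from order_tendstoD(2)[OF this \<epsilon>p]
  obtain \<tau>0 where \<tau>0: "\<tau>0 > 0" and \<tau>0b: "\<And>\<tau>. 0 < \<tau> \<Longrightarrow> \<tau> < \<tau>0 \<Longrightarrow> D * (2 * sqrt (2*\<tau>) * sqrt (2/pi)) < \<epsilon>"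
    unfolding eventually_at_right_field by auto
  have "eventually (\<lambda>b. b \<in> {T - min \<delta> \<tau>0<..<T}) (at_left T)"
    by (rule eventually_at_left_real) (use \<delta> \<tau>0 in simp)
  then show "eventually (\<lambda>b. dist (Ifn T x0 b) (u x0 T) < e) (at_left T)"
  proof (rule eventually_mono)
    fix b assume b: "b \<in> {T - min \<delta> \<tau>0<..<T}"
    have bb: "T - \<delta> < b" "b < T" using b by auto
    have "\<bar>Ifn T x0 b - u x0 T\<bar> \<le> \<epsilon> + D * (2 * sqrt (2*(T-b)) * sqrt (2/pi))"
      unfolding D_def by (rule I_near[OF T \<delta> _ cont bb]) (use \<epsilon>p in auto)
    also have "D * (2 * sqrt (2*(T-b)) * sqrt (2/pi)) < \<epsilon>" using b by (intro \<tau>0b) auto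
    finally have "\<bar>Ifn T x0 b - u x0 T\<bar> < \<epsilon> + \<epsilon>" by simp
    then show "dist (Ifn T x0 b) (u x0 T) < e" unfolding dist_real_def \<epsilon>_def using e by linarith
  qed
qed

end



context hset begin

lemma main_eq:
  assumes T: "T > 0"
  shows "u x0 T = (\<integral>\<xi>. Ff \<xi> * hk1 T (x0 - \<xi>) \<partial>lborel)"
proof -
  define c where "c = Ifn T x0 (T/2)"
  have cs: "Ifn T x0 s = c" if "0 < s" "s < T" for s
  proof (cases "s \<le> T/2")
    case True then show ?thesis unfolding c_def by (rule I_const[OF T that(1)]) (use T in auto)
  next
    case False then show ?thesis unfolding c_def by (intro I_const[OF T, symmetric]) (use T that in auto)
  qed
  have e0: "eventually (\<lambda>s. Ifn T x0 s = c) (at_right 0)"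
    using eventually_at_right_real[OF T] by (rule eventually_mono) (auto intro: cs)
  have eT: "eventually (\<lambda>s. Ifn T x0 s = c) (at_left T)"
    using eventually_at_left_real[OF T] by (rule eventually_mono) (auto intro: cs)
  have l0: "(Ifn T x0 \<longlongrightarrow> c) (at_right 0)" by (rule tendsto_eventually[OF e0])
  have lT: "(Ifn T x0 \<longlongrightarrow> c) (at_left T)" by (rule tendsto_eventually[OF eT])
  have "(\<integral>\<xi>. Ff \<xi> * hk1 T (x0 - \<xi>) \<partial>lborel) = c"
    using tendsto_unique[OF trivial_limit_at_right_real I_lim0[OF T, of x0] l0] .
  moreover have "u x0 T = c"
    using tendsto_unique[OF trivial_limit_at_left_real I_limT[OF T, of x0] lT] .
  ultimately show ?thesis by simp
qed

end

lemma hk_lim_top: "t > 0 \<Longrightarrow> ((\<lambda>\<xi>. heat_kernel t (x - \<xi>)) \<longlongrightarrow> 0) at_top"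
  unfolding heat_kernel_def by real_asymp




theorem theorem6p3:
  fixes u ux uxx ut :: "real \<Rightarrow> real \<Rightarrow> real" and Ff :: "real \<Rightarrow> real"
  assumes cont_u: "continuous_on (UNIV \<times> {0<..}) (\<lambda>(x, t). u x t)"
    and cont_ux: "continuous_on (UNIV \<times> {0<..}) (\<lambda>(x, t). ux x t)"
    and cont_uxx: "continuous_on (UNIV \<times> {0<..}) (\<lambda>(x, t). uxx x t)"
    and cont_ut: "continuous_on (UNIV \<times> {0<..}) (\<lambda>(x, t). ut x t)"
    and der_x: "\<And>x t. t > 0 \<Longrightarrow> ((\<lambda>y. u y t) has_real_derivative ux x t) (at x)"
    and der_xx: "\<And>x t. t > 0 \<Longrightarrow> ((\<lambda>y. ux y t) has_real_derivative uxx x t) (at x)"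
    and der_t: "\<And>x t. t > 0 \<Longrightarrow> ((\<lambda>s. u x s) has_real_derivative ut x t) (at t)"
    and heat: "\<And>x t. t > 0 \<Longrightarrow> ut x t - uxx x t = 0"
    and in_A: "\<And>t. t > 0 \<Longrightarrow> in_Ac (\<lambda>x. u x t)"
    and bdd: "\<exists>M. \<forall>t>0. alex_norm (primitive (\<lambda>x. u x t)) \<le> M"
    and f_A: "Ff \<in> Bc"
    and init: "((\<lambda>t. alex_norm (\<lambda>x. primitive (\<lambda>y. u y t) x - Ff x)) \<longlongrightarrow> 0) (at_right 0)"
  shows "\<forall>x. \<forall>t>0. u x t = Ac_conv Ff (heat_kernel t) x"
proof -
  obtain M where M: "\<And>t. t > 0 \<Longrightarrow> alex_norm (primitive (\<lambda>x. u x t)) \<le> M" using bdd by blast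
  define U where "U s = primitive (\<lambda>x. u x s)" for s
  have Uprim: "Ac_primitive (U s) (\<lambda>x. u x s)" if s: "s > 0" for s
  proof -
    obtain F where F: "Ac_primitive F (\<lambda>x. u x s)" using in_A[OF s] unfolding in_Ac_def by blast
    then show ?thesis using prim_unique[OF F] by (simp add: U_def)
  qed
  have UBc: "U s \<in> Bc" if "s > 0" for s using Uprim[OF that] by (simp add: Ac_primitive_def)
  have U_der: "(U s has_real_derivative u x s) (at x)" if "s > 0" for s x
    using Uprim[OF that] by (simp add: Ac_primitive_def)
  have U_bot: "(U s \<longlongrightarrow> 0) at_bot" if "s > 0" for s using UBc[OF that] by (simp add: Bc_def)
  have F_bot: "(Ff \<longlongrightarrow> 0) at_bot" using f_A by (simp add: Bc_def)
  obtain BF where BF: "\<And>x. \<bar>Ff x\<bar> \<le> BF" using Bc_bounded[OF f_A] by blast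
  have U_bd: "\<bar>U s x\<bar> \<le> M" if s: "s > 0" for s x
  proof -
    obtain B where B: "\<And>x. \<bar>U s x\<bar> \<le> B" using Bc_bounded[OF UBc[OF s]] by blast
    have "\<bar>U s x\<bar> \<le> alex_norm (U s)" by (rule alex_le[OF B U_bot[OF s]])
    also have "\<dots> \<le> M" using M[OF s] by (simp add: U_def)
    finally show ?thesis .
  qed
  have U_init: "((\<lambda>s. U s x) \<longlongrightarrow> Ff x) (at_right 0)" for x
  proof -
    have le: "eventually (\<lambda>s. norm (U s x - Ff x) \<le> alex_norm (\<lambda>x. primitive (\<lambda>y. u y s) x - Ff x)) (at_right 0)"
      using eventually_at_right_real[OF zero_less_one]
    proof (rule eventually_mono)
      fix s :: real assume "s \<in> {0<..<1}"
      then have s: "s > 0" by simp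
      obtain B where B: "\<And>x. \<bar>U s x\<bar> \<le> B" using Bc_bounded[OF UBc[OF s]] by blast
      have Bd: "\<bar>U s y - Ff y\<bar> \<le> B + BF" for y using B[of y] BF[of y] by linarith
      have "((\<lambda>y. U s y - Ff y) \<longlongrightarrow> 0 - 0) at_bot" by (intro tendsto_diff U_bot[OF s] F_bot)
      then have "\<bar>U s x - Ff x\<bar> \<le> alex_norm (\<lambda>y. U s y - Ff y)"
        using alex_le[of "\<lambda>y. U s y - Ff y", OF Bd] by simp
      then show "norm (U s x - Ff x) \<le> alex_norm (\<lambda>x. primitive (\<lambda>y. u y s) x - Ff x)"
        by (simp add: U_def)
    qed
    have "((\<lambda>s. U s x - Ff x) \<longlongrightarrow> 0) (at_right 0)" by (rule Lim_null_comparison[OF le init])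
    then have "((\<lambda>s. U s x - Ff x + Ff x) \<longlongrightarrow> 0 + Ff x) (at_right 0)" by (intro tendsto_add tendsto_const)
    then show ?thesis by simp
  qed
  have Ff_cont: "continuous_on UNIV Ff" using f_A by (simp add: Bc_def)
  interpret hset u ux uxx ut U M Ff
    by (unfold_locales) (use cont_u cont_ux cont_uxx cont_ut der_x der_xx der_t heat U_der U_bd U_init Ff_cont in auto)
  show ?thesis
  proof (intro allI impI)
    fix x t :: real assume t: "t > 0"
    have "u x t = (\<integral>\<xi>. Ff \<xi> * hk1 t (x - \<xi>) \<partial>lborel)" by (rule main_eq[OF t])
    also have "\<dots> = Ac_conv Ff (heat_kernel t) x"
    proof -
      have L0: "Lim at_top (\<lambda>\<xi>. heat_kernel t (x - \<xi>)) = 0"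
        by (rule tendsto_Lim[OF trivial_limit_at_top_linorder hk_lim_top[OF t]])
      have dv: "deriv (\<lambda>\<eta>. heat_kernel t (x - \<eta>)) \<xi> = - hk1 t (x - \<xi>)" for \<xi>
        by (rule DERIV_imp_deriv[OF Phi_derivs(1)[OF t]])
      have cF: "Ff \<in> borel_measurable borel" by (rule borel_measurable_continuous_onI[OF Ff_cont])
      have int: "integrable lborel (\<lambda>\<xi>. Ff \<xi> * - hk1 t (x - \<xi>))"
      proof (rule Bochner_Integration.integrable_bound)
        show "integrable lborel (\<lambda>\<xi>. M * \<bar>hk1 t (x - \<xi>)\<bar>)" using hk1_abs_integrable[OF t] by simp
        show "(\<lambda>\<xi>. Ff \<xi> * - hk1 t (x - \<xi>)) \<in> borel_measurable lborel" using cF by measurable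
        show "AE \<xi> in lborel. norm (Ff \<xi> * - hk1 t (x - \<xi>)) \<le> norm (M * \<bar>hk1 t (x - \<xi>)\<bar>)"
        proof (rule AE_I2)
          fix \<xi>
          have "norm (Ff \<xi> * - hk1 t (x - \<xi>)) = \<bar>Ff \<xi>\<bar> * \<bar>hk1 t (x - \<xi>)\<bar>" by (simp add: abs_mult)
          also have "\<dots> \<le> M * \<bar>hk1 t (x - \<xi>)\<bar>" by (rule mult_right_mono[OF Ff_bd]) simp
          also have "\<dots> \<le> norm (M * \<bar>hk1 t (x - \<xi>)\<bar>)" by simp
          finally show "norm (Ff \<xi> * - hk1 t (x - \<xi>)) \<le> norm (M * \<bar>hk1 t (x - \<xi>)\<bar>)" .
        qed
      qed
      have "integral UNIV (\<lambda>\<xi>. Ff \<xi> * deriv (\<lambda>\<eta>. heat_kernel t (x - \<eta>)) \<xi>) =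
          integral UNIV (\<lambda>\<xi>. Ff \<xi> * - hk1 t (x - \<xi>))" by (simp only: dv)
      also have "\<dots> = (\<integral>\<xi>. Ff \<xi> * - hk1 t (x - \<xi>) \<partial>lborel)" by (rule integral_lborel[OF int])
      also have "\<dots> = - (\<integral>\<xi>. Ff \<xi> * hk1 t (x - \<xi>) \<partial>lborel)" by simp
      finally show ?thesis unfolding Ac_conv_def L0 by simp
    qed
    finally show "u x t = Ac_conv Ff (heat_kernel t) x" .
  qed
qed


end
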